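(* Fix $k\in\{0,\dots,d\}$, $m\in\mathbb N$, $h_0>0$, and put $\mu_1=2\pi/h_0$. Let $x_i=a_0+a\,i$, $i\in\mathbb N$, with $a_0\ge0$, $a>0$ such that $aj/h_0\notin\mathbb Z$ for $j=1,\dots,2m$. Suppose $$y_{ki}=\beta_k+s\,x_i+\sum_{j=1}^m\big(\alpha_j\cos(\mu_1jx_i)-\gamma_j\sin(\mu_1jx_i)\big)+\delta_{ki},\qquad i\in\mathbb N,$$ with unknown parameter $\beta=(\beta_k,s,\alpha_1,\dots,\alpha_m,\gamma_1,\dots,\gamma_m)^\top\in\mathbb R^{2m+2}$ and errors $\delta_{ki}$ of mean zero and finite positive variance whose covariance matrices $Q_n$ of $(\delta_{k1},\dots,\delta_{kn})$ satisfy $0<\inf_n\nu_{\min}(Q_n)\le\sup_n\nu_{\max}(Q_n)<\infty$. For $n\ge2m+2$ let $\hat\beta^{(n)}$ be the ordinary least squares estimator of $\beta$ from $y_{k1},\dots,y_{kn}$. Then $\hat\beta^{(n)}$ is weakly consistent: $P(|\hat\beta^{(n)}-\beta|>\varepsilon)\to0$ as $n\to\infty$ for every $\varepsilon>0$.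
   Context: This is the regression model of the second method: it arises for $F\subset\mathbb R^d$ satisfying (A1), (A2) and (A3'), where (A3') says there is $h\in(0,1)$ such that for each $k$, $\varepsilon^{s-k}C_k(F_\varepsilon)\sim p_k(\varepsilon)$ as $\varepsilon\searrow0$ for a bounded function $p_k$ with $p_k(h\varepsilon)=p_k(\varepsilon)$; then $h_0=-\log h$, $\beta_k=\frac1{h_0}\int_0^{h_0}\log|p_k(e^{-x})|\,dx$, $f_k(x)=\log|p_k(e^{-x})|-\beta_k$ is assumed to be the trigonometric polynomial $\sum_{j=1}^m(\alpha_j\cos(\mu_1jx)-\gamma_j\sin(\mu_1jx))$, and $y_{ki}=\log(\varepsilon_i^{-k}|C_k(F_{\varepsilon_i})|)$ with $x_i=-\log\varepsilon_i$. $\nu_{\min},\nu_{\max}$ denote extreme eigenvalues. *)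

theory Defs
  imports "HOL-Probability.Probability" "Jordan_Normal_Form.Char_Poly"
begin

(* Regressor j (0 \<le> j < 2m+2) evaluated at x, ordered as the parameter vector
   (beta_k, s, alpha_1..alpha_m, gamma_1..gamma_m):
   1, x, cos(mu1 j x) (j=1..m), -sin(mu1 j x) (j=1..m). *)
definition regressor :: "nat \<Rightarrow> real \<Rightarrow> real \<Rightarrow> nat \<Rightarrow> real" where
  "regressor m mu1 x j =
     (if j = 0 then 1
      else if j = 1 then x
      else if j \<le> m + 1 then cos (mu1 * real (j - 1) * x)
      else - sin (mu1 * real (j - m - 1) * x))"

definition param_vec :: "nat \<Rightarrow> real \<Rightarrow> real \<Rightarrow> (nat \<Rightarrow> real) \<Rightarrow> (nat \<Rightarrow> real) \<Rightarrow> nat \<Rightarrow> real" where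
  "param_vec m bk s \<alpha> \<gamma> j =
     (if j = 0 then bk
      else if j = 1 then s
      else if j \<le> m + 1 then \<alpha> (j - 1)
      else if j \<le> 2 * m + 1 then \<gamma> (j - m - 1)
      else 0)"

definition RSS :: "nat \<Rightarrow> real \<Rightarrow> (nat \<Rightarrow> real) \<Rightarrow> (nat \<Rightarrow> real) \<Rightarrow> nat \<Rightarrow> (nat \<Rightarrow> real) \<Rightarrow> real" where
  "RSS m mu1 x y n b = (\<Sum>i=1..n. (y i - (\<Sum>j<2*m+2. b j * regressor m mu1 (x i) j))\<^sup>2)"

(* ordinary least squares estimator: the minimiser of RSS over R^(2m+2)
   (vectors represented as functions vanishing from index 2m+2 on) *)
definition OLS :: "nat \<Rightarrow> real \<Rightarrow> (nat \<Rightarrow> real) \<Rightarrow> (nat \<Rightarrow> real) \<Rightarrow> nat \<Rightarrow> nat \<Rightarrow> real" where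
  "OLS m mu1 x y n = (THE b. (\<forall>j\<ge>2*m+2. b j = 0) \<and>
      (\<forall>c. (\<forall>j\<ge>2*m+2. c j = 0) \<longrightarrow> RSS m mu1 x y n b \<le> RSS m mu1 x y n c))"

definition pdist :: "nat \<Rightarrow> (nat \<Rightarrow> real) \<Rightarrow> (nat \<Rightarrow> real) \<Rightarrow> real" where
  "pdist m b c = sqrt (\<Sum>j<2*m+2. (b j - c j)\<^sup>2)"

definition covar :: "'a measure \<Rightarrow> ('a \<Rightarrow> real) \<Rightarrow> ('a \<Rightarrow> real) \<Rightarrow> real" where
  "covar M X Y = (\<integral>\<omega>. (X \<omega> - (\<integral>\<omega>'. X \<omega>' \<partial>M)) * (Y \<omega> - (\<integral>\<omega>'. Y \<omega>' \<partial>M)) \<partial>M)"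

definition cov_mat :: "'a measure \<Rightarrow> (nat \<Rightarrow> 'a \<Rightarrow> real) \<Rightarrow> nat \<Rightarrow> real mat" where
  "cov_mat M \<delta> n = mat n n (\<lambda>(i, j). covar M (\<delta> (i + 1)) (\<delta> (j + 1)))"

end

theory Submission
  imports Defs "HOL-Real_Asymp.Real_Asymp"
begin

lemma cos_sum_tele:
  "2 * sin (t/2) * (\<Sum>i=1..n. cos (t * real i + p)) = sin (t * real n + p + t/2) - sin (p + t/2)"
proof (induction n)
  case 0 show ?case by simp
next
  case (Suc n)
  have e: "((t * real (Suc n) + p + t/2) - (t * real n + p + t/2))/2 = t/2"
     "((t * real (Suc n) + p + t/2) + (t * real n + p + t/2))/2 = t * real (Suc n) + p"
    by (simp_all add: algebra_simps)
  have "sin (t * real (Suc n) + p + t/2) - sin (t * real n + p + t/2) = 2 * sin (t/2) * cos (t * real (Suc n) + p)"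
    unfolding sin_diff_sin e ..
  then show ?case using Suc by (simp add: algebra_simps)
qed
lemma cos_sum_bound:
  assumes "sin (t/2) \<noteq> 0"
  shows "\<bar>\<Sum>i=1..n. cos (t * real i + p)\<bar> \<le> 1 / \<bar>sin (t/2)\<bar>"
proof -
  have "\<bar>sin (t * real n + p + t/2) - sin (p + t/2)\<bar> \<le> 2"
    using abs_sin_le_one[of "t * real n + p + t/2"] abs_sin_le_one[of "p + t/2"] by linarith
  then have "\<bar>2 * sin (t/2) * (\<Sum>i=1..n. cos (t * real i + p))\<bar> \<le> 2"
    unfolding cos_sum_tele .
  then have "\<bar>sin (t/2)\<bar> * \<bar>\<Sum>i=1..n. cos (t * real i + p)\<bar> \<le> 1" by (simp add: abs_mult)
  then show ?thesis using assms by (simp add: field_simps)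
qed

lemma abel_sum: "(\<Sum>i=1..n. real i * c i) = real n * (\<Sum>i=1..n. c i) - (\<Sum>k<n. \<Sum>i=1..k. c i)"
proof (induction n)
  case 0 show ?case by simp
next
  case (Suc n)
  then show ?case by (simp add: algebra_simps)
qed

lemma abel_bound:
  assumes "\<And>k. \<bar>\<Sum>i=1..k. c i\<bar> \<le> B"
  shows "\<bar>\<Sum>i=1..n. real i * c i\<bar> \<le> 2 * real n * B"
proof -
  have "\<bar>\<Sum>k<n. \<Sum>i=1..k. c i\<bar> \<le> (\<Sum>k<n. B)"
    by (rule order_trans[OF sum_abs]) (rule sum_mono, rule assms)
  then have "\<bar>\<Sum>k<n. \<Sum>i=1..k. c i\<bar> \<le> real n * B" by simp
  moreover have "\<bar>real n * (\<Sum>i=1..n. c i)\<bar> \<le> real n * B"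
    using assms[of n] by (simp add: abs_mult mult_left_mono)
  ultimately show ?thesis unfolding abel_sum by linarith
qed

locale regs =
  fixes m :: nat and mu1 h0 a0 a :: real and x :: "nat \<Rightarrow> real"
  assumes h0: "h0 > 0" and mu1: "mu1 = 2*pi/h0" and a0: "a0 \<ge> 0" and apos: "a > 0"
    and nonint: "\<forall>j\<in>{1..2*m}. a * real j / h0 \<notin> \<int>"
    and xdef: "\<forall>i. x i = a0 + a * real i"
begin

definition F where "F l i = regressor m mu1 (x i) l"
definition kf :: "nat \<Rightarrow> nat" where "kf l = (if l \<le> m+1 then l - 1 else l - m - 1)"
definition ph :: "nat \<Rightarrow> real" where "ph l = (if l \<le> m+1 then 0 else pi/2)"
definition th where "th = mu1 * a"

lemma F_trig: 
  assumes "2 \<le> l" "l < 2*m+2"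
  shows "F l i = cos (th * real (kf l) * real i + (mu1 * real (kf l) * a0 + ph l))"
proof -
  have xi: "mu1 * real (kf l) * x i = th * real (kf l) * real i + mu1 * real (kf l) * a0"
    using xdef by (simp add: th_def algebra_simps)
  show ?thesis
  proof (cases "l \<le> m+1")
    case True
    then show ?thesis using assms xi unfolding F_def regressor_def kf_def ph_def by auto
  next
    case False
    have "- sin z = cos (z + pi/2)" for z by (simp add: cos_add)
    then show ?thesis using False assms xi unfolding F_def regressor_def kf_def ph_def by (auto simp: add.assoc)
  qed
qed

lemma kf_range: "2 \<le> l \<Longrightarrow> l < 2*m+2 \<Longrightarrow> 1 \<le> kf l \<and> kf l \<le> m"
  unfolding kf_def by auto

lemma sin_nz:
  assumes "k \<noteq> 0" "\<bar>k\<bar> \<le> 2 * int m"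
  shows "sin (th * real_of_int k / 2) \<noteq> 0"
proof
  assume "sin (th * real_of_int k / 2) = 0"
  then obtain i :: int where i: "th * real_of_int k / 2 = i * pi" by (auto simp: sin_zero_iff_int2)
  have "th * real_of_int k / 2 = pi * (a * real_of_int k / h0)"
    unfolding th_def unfolding mu1 using h0 by simp
  with i have "pi * (a * real_of_int k / h0) = pi * real_of_int i" by simp
  then have e: "a * real_of_int k / h0 = i" using mult_left_cancel[OF pi_neq_zero] by blast
  define j where "j = nat \<bar>k\<bar>"
  have j: "j \<in> {1..2*m}" using assms unfolding j_def by auto
  have "a * real j / h0 = \<bar>a * real_of_int k / h0\<bar>"
    using apos h0 by (simp add: j_def abs_mult)
  also have "\<dots> = of_int \<bar>i\<bar>" using e by simp
  finally have "a * real j / h0 \<in> \<int>" by simp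
  with nonint j show False by auto
qed

lemma trig_bound:
  assumes "k \<noteq> 0" "\<bar>k\<bar> \<le> 2 * int m"
  shows "\<bar>\<Sum>i=1..n. cos (th * real_of_int k * real i + \<phi>)\<bar> \<le> 1 / \<bar>sin (th * real_of_int k / 2)\<bar>"
  using cos_sum_bound[OF sin_nz[OF assms]] by simp

lemma trig_avg:
  assumes "k \<noteq> 0" "\<bar>k\<bar> \<le> 2 * int m"
  shows "(\<lambda>n. (\<Sum>i=1..n. cos (th * real_of_int k * real i + \<phi>)) / real n) \<longlonglongrightarrow> 0"
proof (rule Lim_null_comparison)
  let ?B = "1 / \<bar>sin (th * real_of_int k / 2)\<bar>"
  show "\<forall>\<^sub>F n in sequentially. norm ((\<Sum>i=1..n. cos (th * real_of_int k * real i + \<phi>)) / real n) \<le> ?B / real n"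
  proof (intro always_eventually allI)
    fix n
    have "\<bar>\<Sum>i=1..n. cos (th * real_of_int k * real i + \<phi>)\<bar> / real n \<le> ?B / real n"
      by (rule divide_right_mono[OF trig_bound[OF assms]]) simp
    then show "norm ((\<Sum>i=1..n. cos (th * real_of_int k * real i + \<phi>)) / real n) \<le> ?B / real n" by simp
  qed
  show "(\<lambda>n. ?B / real n) \<longlonglongrightarrow> 0" by real_asymp
qed

lemma trig_avg0:
  "(\<lambda>n. (\<Sum>i=1..n. cos (th * real_of_int 0 * real i + \<phi>)) / real n) \<longlonglongrightarrow> cos \<phi>"
proof -
  have "\<forall>\<^sub>F n in sequentially. cos \<phi> = (\<Sum>i=1..n. cos (th * real_of_int 0 * real i + \<phi>)) / real n"
    using eventually_gt_at_top[of 0] by eventually_elim auto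
  then show ?thesis by (rule Lim_transform_eventually[OF tendsto_const])
qed

lemma trig_lin:
  assumes "k \<noteq> 0" "\<bar>k\<bar> \<le> 2 * int m"
  shows "(\<lambda>n. (\<Sum>i=1..n. x i * cos (th * real_of_int k * real i + \<phi>)) / (a * real n * real n)) \<longlonglongrightarrow> 0"
proof (rule Lim_null_comparison)
  let ?B = "1 / \<bar>sin (th * real_of_int k / 2)\<bar>"
  let ?c = "\<lambda>i. cos (th * real_of_int k * real i + \<phi>)"
  have "(\<Sum>i=1..n. x i * ?c i) = a0 * (\<Sum>i=1..n. ?c i) + a * (\<Sum>i=1..n. real i * ?c i)" for n
    using xdef by (simp add: algebra_simps sum_distrib_left sum.distrib)
  moreover have "\<bar>\<Sum>i=1..n. real i * ?c i\<bar> \<le> 2 * real n * ?B" for n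
    by (rule abel_bound, rule trig_bound[OF assms])
  moreover have "\<bar>\<Sum>i=1..n. ?c i\<bar> \<le> ?B" for n by (rule trig_bound[OF assms])
  ultimately have b: "\<bar>\<Sum>i=1..n. x i * ?c i\<bar> \<le> a0 * ?B + a * (2 * real n * ?B)" for n
  proof -
    assume e: "\<And>n. (\<Sum>i=1..n. x i * ?c i) = a0 * (\<Sum>i=1..n. ?c i) + a * (\<Sum>i=1..n. real i * ?c i)"
      and b1: "\<And>n. \<bar>\<Sum>i=1..n. real i * ?c i\<bar> \<le> 2 * real n * ?B" and b2: "\<And>n. \<bar>\<Sum>i=1..n. ?c i\<bar> \<le> ?B"
    have "\<bar>a0 * (\<Sum>i=1..n. ?c i)\<bar> = a0 * \<bar>\<Sum>i=1..n. ?c i\<bar>" using a0 by (simp add: abs_mult)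
    also have "\<dots> \<le> a0 * ?B" using a0 b2[of n] by (rule mult_left_mono[rotated])
    finally have "\<bar>a0 * (\<Sum>i=1..n. ?c i)\<bar> \<le> a0 * ?B" .
    moreover have "\<bar>a * (\<Sum>i=1..n. real i * ?c i)\<bar> \<le> a * (2 * real n * ?B)"
    proof -
      have "\<bar>a * (\<Sum>i=1..n. real i * ?c i)\<bar> = a * \<bar>\<Sum>i=1..n. real i * ?c i\<bar>" using apos by (simp add: abs_mult)
      also have "\<dots> \<le> a * (2 * real n * ?B)" by (rule mult_left_mono[OF b1[of n]]) (use apos in simp)
      finally show ?thesis .
    qed
    ultimately show ?thesis unfolding e by linarith
  qed
  show "\<forall>\<^sub>F n in sequentially. norm ((\<Sum>i=1..n. x i * ?c i) / (a * real n * real n)) \<le> (a0 * ?B + a * (2 * real n * ?B)) / (a * real n * real n)"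
  proof (intro always_eventually allI)
    fix n
    have "\<bar>\<Sum>i=1..n. x i * ?c i\<bar> / (a * real n * real n) \<le> (a0 * ?B + a * (2 * real n * ?B)) / (a * real n * real n)"
      by (rule divide_right_mono[OF b]) (use apos in simp)
    then show "norm ((\<Sum>i=1..n. x i * ?c i) / (a * real n * real n)) \<le> (a0 * ?B + a * (2 * real n * ?B)) / (a * real n * real n)"
      using apos by (simp add: abs_mult)
  qed
  show "(\<lambda>n. (a0 * ?B + a * (2 * real n * ?B)) / (a * real n * real n)) \<longlonglongrightarrow> 0"
  proof -
    have "(\<lambda>n. (a0 * ?B + a * (2 * real n * ?B)) / (a * real n * real n)) = (\<lambda>n. (a0 * ?B / a) * (1 / (real n * real n)) + (2 * ?B) * (1 / real n))"
    proof
      fix n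
      show "(a0 * ?B + a * (2 * real n * ?B)) / (a * real n * real n) = (a0 * ?B / a) * (1 / (real n * real n)) + (2 * ?B) * (1 / real n)"
        using apos sin_nz[OF assms] by (cases "n = 0") (auto simp: field_simps)
    qed
    moreover have "(\<lambda>n. (a0 * ?B / a) * (1 / (real n * real n)) + (2 * ?B) * (1 / real n)) \<longlonglongrightarrow> (a0 * ?B / a) * 0 + (2 * ?B) * 0"
    proof (rule tendsto_add)
      have "(\<lambda>n. 1 / (real n * real n)) \<longlonglongrightarrow> 0" by real_asymp
      then show "(\<lambda>n. (a0 * ?B / a) * (1 / (real n * real n))) \<longlonglongrightarrow> (a0 * ?B / a) * 0" by (rule tendsto_mult_left)
      have "(\<lambda>n. 1 / (real n)) \<longlonglongrightarrow> 0" by real_asymp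
      then show "(\<lambda>n. (2 * ?B) * (1 / real n)) \<longlonglongrightarrow> (2 * ?B) * 0" by (rule tendsto_mult_left)
    qed
    ultimately show ?thesis by simp
  qed
qed

end


definition Rq :: "nat \<Rightarrow> (nat \<Rightarrow> nat \<Rightarrow> real) \<Rightarrow> (nat \<Rightarrow> real) \<Rightarrow> real" where
  "Rq n q v = (\<Sum>i<n. \<Sum>j<n. v i * q i j * v j)"

definition nsq :: "nat \<Rightarrow> (nat \<Rightarrow> real) \<Rightarrow> real" where
  "nsq n v = (\<Sum>i<n. (v i)\<^sup>2)"

lemma Rq_scale: "Rq n q (\<lambda>i. c * v i) = c\<^sup>2 * Rq n q v"
  unfolding Rq_def sum_distrib_left by (simp add: power2_eq_square mult_ac)

lemma nsq_scale: "nsq n (\<lambda>i. c * v i) = c\<^sup>2 * nsq n v"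
  unfolding nsq_def sum_distrib_left by (simp add: power2_eq_square mult_ac)

lemma Rq_cong: "(\<And>i. i < n \<Longrightarrow> v i = w i) \<Longrightarrow> Rq n q v = Rq n q w"
  unfolding Rq_def by (intro sum.cong refl) auto

lemma nsq_cong: "(\<And>i. i < n \<Longrightarrow> v i = w i) \<Longrightarrow> nsq n v = nsq n w"
  unfolding nsq_def by (intro sum.cong refl) auto

lemma nsq_nonneg: "0 \<le> nsq n v" unfolding nsq_def by (intro sum_nonneg) simp

lemma Rq_add:
  assumes sym: "\<forall>i<n. \<forall>j<n. q i j = q j i"
  shows "Rq n q (\<lambda>i. u i + t * h i) = Rq n q u + 2 * t * (\<Sum>i<n. h i * (\<Sum>j<n. q i j * u j)) + t\<^sup>2 * Rq n q h"
proof -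
  have cross: "(\<Sum>i<n. \<Sum>j<n. u i * q i j * h j) = (\<Sum>i<n. h i * (\<Sum>j<n. q i j * u j))"
  proof -
    have "(\<Sum>i<n. \<Sum>j<n. u i * q i j * h j) = (\<Sum>j<n. \<Sum>i<n. u i * q i j * h j)" by (rule sum.swap)
    also have "\<dots> = (\<Sum>j<n. h j * (\<Sum>i<n. q j i * u i))"
      unfolding sum_distrib_left using sym by (intro sum.cong refl) (simp add: mult_ac)
    finally show ?thesis .
  qed
  have "Rq n q (\<lambda>i. u i + t * h i) = (\<Sum>i<n. \<Sum>j<n. u i * q i j * u j + t * (u i * q i j * h j) + t * (h i * q i j * u j) + t\<^sup>2 * (h i * q i j * h j))"
    unfolding Rq_def by (intro sum.cong refl) (simp add: algebra_simps power2_eq_square)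
  also have "\<dots> = Rq n q u + t * (\<Sum>i<n. \<Sum>j<n. u i * q i j * h j) + t * (\<Sum>i<n. \<Sum>j<n. h i * q i j * u j) + t\<^sup>2 * Rq n q h"
    unfolding Rq_def by (simp add: sum.distrib sum_distrib_left)
  also have "(\<Sum>i<n. \<Sum>j<n. h i * q i j * u j) = (\<Sum>i<n. h i * (\<Sum>j<n. q i j * u j))"
    by (simp add: sum_distrib_left mult_ac)
  finally show ?thesis unfolding cross by simp
qed

lemma nsq_add: "nsq n (\<lambda>i. u i + t * h i) = nsq n u + 2 * t * (\<Sum>i<n. h i * u i) + t\<^sup>2 * nsq n h"
proof -
  have "nsq n (\<lambda>i. u i + t * h i) = (\<Sum>i<n. (u i)\<^sup>2 + 2 * t * (h i * u i) + t\<^sup>2 * (h i)\<^sup>2)"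
    unfolding nsq_def by (intro sum.cong refl) (simp add: algebra_simps power2_eq_square)
  also have "\<dots> = nsq n u + 2 * t * (\<Sum>i<n. h i * u i) + t\<^sup>2 * nsq n h"
    unfolding nsq_def by (simp add: sum.distrib sum_distrib_left)
  finally show ?thesis .
qed

lemma quad_aux: "d > 0 \<Longrightarrow> 2 * (g / d) * g + (g / d)\<^sup>2 * (c::real) = g\<^sup>2 / d * (2 + c / d)"
  by (simp add: field_simps power2_eq_square)

lemma cpc: "continuous_on S (\<lambda>x::nat\<Rightarrow>real. x i)"
  by (rule continuous_on_subset[OF continuous_on_product_coordinates]) simp

lemma quad_zero:
  fixes g c :: real
  assumes "\<And>t. 2 * t * g + t\<^sup>2 * c \<le> 0"
  shows "g = 0"
proof (rule ccontr)
  assume g: "g \<noteq> 0"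
  define t where "t = g / (\<bar>c\<bar> + 1)"
  have d: "\<bar>c\<bar> + 1 > 0" by simp
  have "2 * t * g + t\<^sup>2 * c = g\<^sup>2 / (\<bar>c\<bar> + 1) * (2 + c / (\<bar>c\<bar> + 1))"
    unfolding t_def by (rule quad_aux[OF d])
  moreover have "c / (\<bar>c\<bar> + 1) > -1" using d by (simp add: field_simps)
  moreover have "g\<^sup>2 / (\<bar>c\<bar> + 1) > 0" using g d by simp
  ultimately have "2 * t * g + t\<^sup>2 * c > 0"
  proof -
    assume e: "2 * t * g + t\<^sup>2 * c = g\<^sup>2 / (\<bar>c\<bar> + 1) * (2 + c / (\<bar>c\<bar> + 1))"
      and b: "c / (\<bar>c\<bar> + 1) > -1" and p: "g\<^sup>2 / (\<bar>c\<bar> + 1) > 0"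
    have "2 + c / (\<bar>c\<bar> + 1) > 0" using b by linarith
    with p have "g\<^sup>2 / (\<bar>c\<bar> + 1) * (2 + c / (\<bar>c\<bar> + 1)) > 0" by (rule mult_pos_pos)
    with e show ?thesis by simp
  qed
  with assms[of t] show False by simp
qed

lemma compact_sphere_fun:
  "compact {v :: nat \<Rightarrow> real. (\<forall>i\<ge>n. v i = 0) \<and> nsq n v = 1}"
proof -
  define K where "K = PiE UNIV (\<lambda>i. if i < n then {-1..1::real} else {0})"
  have "compactin (product_topology (\<lambda>i. euclidean) UNIV) K"
    unfolding K_def compactin_PiE by auto
  then have cK: "compact K" unfolding euclidean_product_topology compactin_euclidean_iff .
  have cl: "closed {v :: nat \<Rightarrow> real. nsq n v = 1}"
    unfolding nsq_def by (intro closed_Collect_eq continuous_intros continuous_on_product_coordinates)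
  have eq: "{v :: nat \<Rightarrow> real. (\<forall>i\<ge>n. v i = 0) \<and> nsq n v = 1} = K \<inter> {v. nsq n v = 1}"
  proof (intro equalityI subsetI)
    fix v assume v: "v \<in> {v :: nat \<Rightarrow> real. (\<forall>i\<ge>n. v i = 0) \<and> nsq n v = 1}"
    have "\<bar>v i\<bar> \<le> 1" if "i < n" for i
    proof -
      have "(v i)\<^sup>2 \<le> nsq n v" unfolding nsq_def by (rule member_le_sum) (use that in auto)
      then have "(v i)\<^sup>2 \<le> 1\<^sup>2" using v by simp
      then show ?thesis using abs_le_square_iff[of "v i" 1] by simp
    qed
    then show "v \<in> K \<inter> {v. nsq n v = 1}" using v unfolding K_def PiE_def by (auto simp: abs_le_iff)
  next
    fix v assume "v \<in> K \<inter> {v. nsq n v = 1}"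
    then show "v \<in> {v :: nat \<Rightarrow> real. (\<forall>i\<ge>n. v i = 0) \<and> nsq n v = 1}"
      unfolding K_def PiE_def by (auto split: if_splits)
  qed
  show ?thesis unfolding eq by (rule compact_Int_closed[OF cK cl])
qed

lemma rayleigh:
  fixes q :: "nat \<Rightarrow> nat \<Rightarrow> real"
  assumes sym: "\<forall>i<n. \<forall>j<n. q i j = q j i"
    and ev: "\<And>lam v. (\<exists>j<n. v j \<noteq> 0) \<Longrightarrow> (\<forall>i<n. (\<Sum>j<n. q i j * v j) = lam * v i) \<Longrightarrow> lam \<le> C"
  shows "Rq n q v \<le> C * nsq n v"
proof (cases "n = 0")
  case True then show ?thesis by (simp add: Rq_def nsq_def)
next
  case False
  define S where "S = {v :: nat \<Rightarrow> real. (\<forall>i\<ge>n. v i = 0) \<and> nsq n v = 1}"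
  have "nsq n (\<lambda>i. if i = 0 then 1 else 0) = (\<Sum>i<n. if i = 0 then 1 else 0)"
    unfolding nsq_def by (rule sum.cong) auto
  also have "\<dots> = 1" using False by simp
  finally have "(\<lambda>i. if i = 0 then 1 else 0) \<in> S" using False unfolding S_def by auto
  then have Sne: "S \<noteq> {}" by blast
  have cont: "continuous_on S (Rq n q)"
    unfolding Rq_def by (intro continuous_intros cpc)
  obtain u where u: "u \<in> S" and umax: "\<And>w. w \<in> S \<Longrightarrow> Rq n q w \<le> Rq n q u"
    using continuous_attains_sup[OF compact_sphere_fun[of n, folded S_def] Sne cont] by blast
  define lam where "lam = Rq n q u"
  have bound: "Rq n q w \<le> lam * nsq n w" for w
  proof (cases "nsq n w = 0")
    case True
    then have "\<forall>i<n. (w i)\<^sup>2 = 0" unfolding nsq_def by (subst (asm) sum_nonneg_eq_0_iff) auto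
    then have "Rq n q w = 0" unfolding Rq_def by simp
    with True show ?thesis by simp
  next
    case False
    have pos: "nsq n w > 0" using False nsq_nonneg[of n w] by simp
    define c where "c = 1 / sqrt (nsq n w)"
    define w' where "w' i = (if i < n then c * w i else 0)" for i
    have c2: "c\<^sup>2 * nsq n w = 1" unfolding c_def using pos by (simp add: power_divide)
    have "nsq n w' = c\<^sup>2 * nsq n w" unfolding nsq_scale[symmetric] by (rule nsq_cong) (simp add: w'_def)
    then have "w' \<in> S" unfolding S_def using c2 by (simp add: w'_def)
    then have "Rq n q w' \<le> lam" unfolding lam_def by (rule umax)
    moreover have "Rq n q w' = c\<^sup>2 * Rq n q w" unfolding Rq_scale[symmetric] by (rule Rq_cong) (simp add: w'_def)
    ultimately have "c\<^sup>2 * Rq n q w \<le> c\<^sup>2 * nsq n w * lam" using c2 by simp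
    moreover have "c\<^sup>2 > 0" unfolding c_def using pos by simp
    ultimately show ?thesis by (simp add: mult_ac)
  qed
  have eig: "\<forall>i<n. (\<Sum>j<n. q i j * u j) = lam * u i"
  proof -
    define h where "h i = (if i < n then (\<Sum>j<n. q i j * u j) - lam * u i else 0)" for i
    have "2 * t * (\<Sum>i<n. h i * ((\<Sum>j<n. q i j * u j) - lam * u i)) + t\<^sup>2 * (Rq n q h - lam * nsq n h) \<le> 0" for t
    proof -
      have "Rq n q (\<lambda>i. u i + t * h i) \<le> lam * nsq n (\<lambda>i. u i + t * h i)" by (rule bound)
      moreover have "nsq n u = 1" "Rq n q u = lam" using u unfolding S_def lam_def by auto
      ultimately have ineq: "lam + 2 * t * (\<Sum>i<n. h i * (\<Sum>j<n. q i j * u j)) + t\<^sup>2 * Rq n q h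
          \<le> lam * (1 + 2 * t * (\<Sum>i<n. h i * u i) + t\<^sup>2 * nsq n h)"
        unfolding Rq_add[OF sym] nsq_add by simp
      define A where "A = (\<Sum>i<n. h i * (\<Sum>j<n. q i j * u j))"
      define B where "B = (\<Sum>i<n. h i * u i)"
      have eq: "(\<Sum>i<n. h i * ((\<Sum>j<n. q i j * u j) - lam * u i)) = A - lam * B"
        unfolding A_def B_def by (simp add: right_diff_distrib sum_subtractf sum_distrib_left mult_ac)
      have ineq2: "lam + (2 * t * A + t\<^sup>2 * Rq n q h) \<le> lam + (2 * t * lam * B + t\<^sup>2 * lam * nsq n h)"
        using ineq unfolding A_def[symmetric] B_def[symmetric] by (simp add: distrib_left mult_ac)
      have "2 * t * (A - lam * B) + t\<^sup>2 * (Rq n q h - lam * nsq n h) = (2 * t * A + t\<^sup>2 * Rq n q h) - (2 * t * lam * B + t\<^sup>2 * lam * nsq n h)"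
        by (simp add: algebra_simps)
      with ineq2 show ?thesis unfolding eq by linarith
    qed
    then have "(\<Sum>i<n. h i * ((\<Sum>j<n. q i j * u j) - lam * u i)) = 0" by (rule quad_zero)
    then have "(\<Sum>i<n. ((\<Sum>j<n. q i j * u j) - lam * u i)\<^sup>2) = 0"
      by (simp add: h_def power2_eq_square)
    then have "\<forall>i<n. ((\<Sum>j<n. q i j * u j) - lam * u i)\<^sup>2 = 0" by (subst (asm) sum_nonneg_eq_0_iff) auto
    then show ?thesis by simp
  qed
  have "\<exists>j<n. u j \<noteq> 0"
  proof (rule ccontr)
    assume "\<not> (\<exists>j<n. u j \<noteq> 0)"
    then have "nsq n u = 0" unfolding nsq_def by simp
    with u show False unfolding S_def by simp
  qed
  then have "lam \<le> C" using eig by (rule ev)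
  have "Rq n q v \<le> lam * nsq n v" by (rule bound)
  also have "\<dots> \<le> C * nsq n v" using \<open>lam \<le> C\<close> nsq_nonneg[of n v] by (rule mult_right_mono)
  finally show ?thesis .
qed


lemma integrable_prod_sq:
  fixes D :: "nat \<Rightarrow> 'a \<Rightarrow> real"
  assumes m: "D i \<in> borel_measurable M" "D j \<in> borel_measurable M"
    and s: "integrable M (\<lambda>\<omega>. (D i \<omega>)\<^sup>2)" "integrable M (\<lambda>\<omega>. (D j \<omega>)\<^sup>2)"
  shows "integrable M (\<lambda>\<omega>. D i \<omega> * D j \<omega>)"
proof (rule Bochner_Integration.integrable_bound)
  show "integrable M (\<lambda>\<omega>. (D i \<omega>)\<^sup>2 + (D j \<omega>)\<^sup>2)" using s by simp
  show "(\<lambda>\<omega>. D i \<omega> * D j \<omega>) \<in> borel_measurable M" using m by measurable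
  show "AE \<omega> in M. norm (D i \<omega> * D j \<omega>) \<le> norm ((D i \<omega>)\<^sup>2 + (D j \<omega>)\<^sup>2)"
  proof (rule AE_I2)
    fix \<omega>
    have "0 \<le> (\<bar>D i \<omega>\<bar> - \<bar>D j \<omega>\<bar>)\<^sup>2" by simp
    then have "\<bar>D i \<omega>\<bar> * \<bar>D j \<omega>\<bar> \<le> (D i \<omega>)\<^sup>2 + (D j \<omega>)\<^sup>2"
      by (simp add: power2_eq_square algebra_simps) (smt (verit) abs_ge_zero mult_nonneg_nonneg)
    then show "norm (D i \<omega> * D j \<omega>) \<le> norm ((D i \<omega>)\<^sup>2 + (D j \<omega>)\<^sup>2)" by (simp add: abs_mult)
  qed
qed

lemma second_moment:
  fixes D :: "nat \<Rightarrow> 'a \<Rightarrow> real"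
  assumes I: "finite I"
    and m: "\<And>i. i \<in> I \<Longrightarrow> D i \<in> borel_measurable M"
    and s: "\<And>i. i \<in> I \<Longrightarrow> integrable M (\<lambda>\<omega>. (D i \<omega>)\<^sup>2)"
  shows "integrable M (\<lambda>\<omega>. (\<Sum>i\<in>I. v i * D i \<omega>)\<^sup>2)"
    and "(\<integral>\<omega>. (\<Sum>i\<in>I. v i * D i \<omega>)\<^sup>2 \<partial>M) = (\<Sum>i\<in>I. \<Sum>j\<in>I. v i * v j * (\<integral>\<omega>. D i \<omega> * D j \<omega> \<partial>M))"
proof -
  have eq: "(\<Sum>i\<in>I. v i * D i \<omega>)\<^sup>2 = (\<Sum>i\<in>I. \<Sum>j\<in>I. v i * v j * (D i \<omega> * D j \<omega>))" for \<omega>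
    unfolding power2_eq_square sum_product by (simp add: mult_ac)
  have int: "integrable M (\<lambda>\<omega>. v i * v j * (D i \<omega> * D j \<omega>))" if "i \<in> I" "j \<in> I" for i j
    using integrable_prod_sq[OF m[OF that(1)] m[OF that(2)] s[OF that(1)] s[OF that(2)]] by simp
  show "integrable M (\<lambda>\<omega>. (\<Sum>i\<in>I. v i * D i \<omega>)\<^sup>2)"
    unfolding eq by (intro Bochner_Integration.integrable_sum int)
  have "(\<integral>\<omega>. (\<Sum>i\<in>I. v i * D i \<omega>)\<^sup>2 \<partial>M) = (\<Sum>i\<in>I. \<integral>\<omega>. (\<Sum>j\<in>I. v i * v j * (D i \<omega> * D j \<omega>)) \<partial>M)"
    unfolding eq by (rule Bochner_Integration.integral_sum) (intro Bochner_Integration.integrable_sum int)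
  also have "\<dots> = (\<Sum>i\<in>I. \<Sum>j\<in>I. \<integral>\<omega>. v i * v j * (D i \<omega> * D j \<omega>) \<partial>M)"
    by (intro sum.cong refl Bochner_Integration.integral_sum int)
  also have "\<dots> = (\<Sum>i\<in>I. \<Sum>j\<in>I. v i * v j * (\<integral>\<omega>. D i \<omega> * D j \<omega> \<partial>M))"
    by simp
  finally show "(\<integral>\<omega>. (\<Sum>i\<in>I. v i * D i \<omega>)\<^sup>2 \<partial>M) = (\<Sum>i\<in>I. \<Sum>j\<in>I. v i * v j * (\<integral>\<omega>. D i \<omega> * D j \<omega> \<partial>M))" .
qed


lemma sum_id_real: "sum real {Suc 0..n} = real n * (real n + 1) / 2"
  by (induction n) (simp_all add: field_simps)

lemma sum_sq_real: "(\<Sum>i=Suc 0..n. (real i)\<^sup>2) = real n * (real n + 1) * (2 * real n + 1) / 6"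
  by (induction n) (simp_all add: field_simps power2_eq_square)

context regs begin

definition G where "G n l l' = (\<Sum>i=1..n. F l i * F l' i)"
definition sc :: "nat \<Rightarrow> nat \<Rightarrow> real" where "sc n l = (if l = 1 then a * real n * sqrt (real n) else sqrt (real n))"
definition H where "H n l l' = G n l l' / (sc n l * sc n l')"
definition Hlim :: "nat \<Rightarrow> nat \<Rightarrow> real" where
  "Hlim l l' = (if l = 0 \<and> l' = 0 then 1 else if l = 1 \<and> l' = 1 then 1/3
     else if l < 2 \<and> l' < 2 then 1/2 else if l = l' then 1/2 else 0)"

lemma F0: "F 0 i = 1" and F1: "F (Suc 0) i = x i"
  by (simp_all add: F_def regressor_def)

lemma G_sym: "G n l l' = G n l' l" by (simp add: G_def mult.commute)
lemma H_sym: "H n l l' = H n l' l" by (simp add: H_def G_sym mult.commute)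
lemma Hlim_sym: "Hlim l l' = Hlim l' l" by (auto simp: Hlim_def)

lemma sqn: "sqrt (real n) * sqrt (real n) = real n" by simp
lemma sc0: "l \<noteq> 1 \<Longrightarrow> sc n l = sqrt (real n)" by (simp add: sc_def)
lemma sc1: "sc n 1 = a * real n * sqrt (real n)" by (simp add: sc_def)
lemma sc_sq: "l \<noteq> 1 \<Longrightarrow> l' \<noteq> 1 \<Longrightarrow> sc n l * sc n l' = real n" unfolding sc_def using sqn[of n] by simp
lemma sc_01: "sc n 0 * sc n 1 = a * real n * real n"
proof -
  have "sqrt (real n) * (a * real n * sqrt (real n)) = a * real n * (sqrt (real n) * sqrt (real n))" by (simp only: mult_ac)
  then show ?thesis using sc0[of 0 n] sc1[of n] sqn[of n] by simp
qed
lemma sc_1t: "l' \<noteq> 1 \<Longrightarrow> sc n 1 * sc n l' = a * real n * real n"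
proof -
  assume "l' \<noteq> 1"
  have "(a * real n * sqrt (real n)) * sqrt (real n) = a * real n * (sqrt (real n) * sqrt (real n))" by (simp only: mult_ac)
  then show ?thesis using sc0[of l' n] sc1[of n] sqn[of n] \<open>l' \<noteq> 1\<close> by simp
qed
lemma sc_11: "sc n 1 * sc n 1 = a * a * real n * real n * real n"
proof -
  have "(a * real n * sqrt (real n)) * (a * real n * sqrt (real n)) = a * a * real n * real n * (sqrt (real n) * sqrt (real n))" by (simp only: mult_ac)
  then show ?thesis using sc0[of 0 n] sc1[of n] sqn[of n] by simp
qed

lemma H00: "(\<lambda>n. H n 0 0) \<longlonglongrightarrow> 1"
proof -
  have "\<forall>\<^sub>F n in sequentially. 1 = H n 0 0"
    using eventually_gt_at_top[of 0] by eventually_elim (simp add: H_def sc_sq G_def F0)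
  then show ?thesis by (rule Lim_transform_eventually[OF tendsto_const])
qed

lemma H01: "(\<lambda>n. H n 0 1) \<longlonglongrightarrow> 1/2"
proof -
  have "G n 0 1 = real n * a0 + a * (real n * (real n + 1) / 2)" for n
    using xdef by (simp add: G_def F0 F1 sum.distrib sum_distrib_left[symmetric] sum_id_real)
  then have "H n 0 1 = (real n * a0 + a * (real n * (real n + 1) / 2)) / (a * real n * real n)" for n
    unfolding H_def sc_01 by simp
  moreover have "(\<lambda>n. (real n * a0 + a * (real n * (real n + 1) / 2)) / (a * real n * real n)) \<longlonglongrightarrow> 1/2"
    using apos by real_asymp
  ultimately show ?thesis by simp
qed

lemma H11: "(\<lambda>n. H n 1 1) \<longlonglongrightarrow> 1/3"
proof -
  have "x i * x i = a0 * a0 + 2 * a0 * a * real i + a * a * real i ^ 2" for i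
    using xdef by (simp add: algebra_simps power2_eq_square)
  then have "G n 1 1 = real n * a0 * a0 + 2 * a0 * a * (real n * (real n + 1) / 2)
      + a * a * (real n * (real n + 1) * (2 * real n + 1) / 6)" for n
    by (simp add: G_def F1 sum.distrib sum_distrib_left[symmetric] sum_id_real sum_sq_real)
  then have "H n 1 1 = (real n * a0 * a0 + 2 * a0 * a * (real n * (real n + 1) / 2)
      + a * a * (real n * (real n + 1) * (2 * real n + 1) / 6)) / (a * a * real n * real n * real n)" for n
    unfolding H_def sc_11 by simp
  moreover have "(\<lambda>n. (real n * a0 * a0 + 2 * a0 * a * (real n * (real n + 1) / 2)
      + a * a * (real n * (real n + 1) * (2 * real n + 1) / 6)) / (a * a * real n * real n * real n)) \<longlonglongrightarrow> 1/3"
  proof -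
    have "(\<lambda>n. (a0 * a0 / (a * a)) * (1 / (real n * real n)) + (a0 / a) * ((real n + 1) / (real n * real n))
        + (real n + 1) * (2 * real n + 1) / (6 * real n * real n)) \<longlonglongrightarrow> (a0 * a0 / (a * a)) * 0 + (a0 / a) * 0 + 1/3"
      by (intro tendsto_add tendsto_mult_left) real_asymp+
    moreover have "(real n * a0 * a0 + 2 * a0 * a * (real n * (real n + 1) / 2)
      + a * a * (real n * (real n + 1) * (2 * real n + 1) / 6)) / (a * a * real n * real n * real n)
      = (a0 * a0 / (a * a)) * (1 / (real n * real n)) + (a0 / a) * ((real n + 1) / (real n * real n))
        + (real n + 1) * (2 * real n + 1) / (6 * real n * real n)" for n
      using apos by (cases "n = 0") (simp_all add: field_simps)
    ultimately show ?thesis by simp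
  qed
  ultimately show ?thesis by simp
qed

end

context regs begin

definition phi where "phi l = mu1 * real (kf l) * a0 + ph l"

lemma F_trig': "2 \<le> l \<Longrightarrow> l < 2*m+2 \<Longrightarrow> F l i = cos (th * real_of_int (int (kf l)) * real i + phi l)"
  using F_trig by (simp add: phi_def)

lemma kf_int: "2 \<le> l \<Longrightarrow> l < 2*m+2 \<Longrightarrow> int (kf l) \<noteq> 0 \<and> \<bar>int (kf l)\<bar> \<le> 2 * int m"
  using kf_range[of l] by auto

lemma H0t: assumes "2 \<le> l" "l < 2*m+2" shows "(\<lambda>n. H n 0 l) \<longlonglongrightarrow> 0"
proof -
  have "H n 0 l = (\<Sum>i=1..n. cos (th * real_of_int (int (kf l)) * real i + phi l)) / real n" for n
    unfolding H_def G_def using sc_sq[of 0 l n] assms by (simp add: F0 F_trig')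
  then show ?thesis using trig_avg[of "int (kf l)" "phi l"] kf_int[OF assms] by simp
qed

lemma H1t: assumes "2 \<le> l" "l < 2*m+2" shows "(\<lambda>n. H n 1 l) \<longlonglongrightarrow> 0"
proof -
  have "H n 1 l = (\<Sum>i=1..n. x i * cos (th * real_of_int (int (kf l)) * real i + phi l)) / (a * real n * real n)" for n
    unfolding H_def G_def using sc_1t[of l n] assms by (simp add: F1 F_trig')
  then show ?thesis using trig_lin[of "int (kf l)" "phi l"] kf_int[OF assms] by simp
qed

lemma kf_eq_ph:
  assumes "2 \<le> l" "l < 2*m+2" "2 \<le> l'" "l' < 2*m+2" "l \<noteq> l'" "kf l = kf l'"
  shows "cos (phi l - phi l') = 0"
proof -
  have "(l \<le> m+1 \<and> \<not> l' \<le> m+1) \<or> (l' \<le> m+1 \<and> \<not> l \<le> m+1)"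
    using assms unfolding kf_def by (auto split: if_splits)
  then have "phi l - phi l' = pi/2 \<or> phi l - phi l' = - (pi/2)"
    using assms(6) unfolding phi_def ph_def by auto
  then show ?thesis by (metis cos_pi_half cos_minus)
qed

lemma Htt: assumes l: "2 \<le> l" "l < 2*m+2" and l': "2 \<le> l'" "l' < 2*m+2"
  shows "(\<lambda>n. H n l l') \<longlonglongrightarrow> Hlim l l'"
proof -
  define k1 where "k1 = int (kf l) - int (kf l')"
  define k2 where "k2 = int (kf l) + int (kf l')"
  have k2: "k2 \<noteq> 0" "\<bar>k2\<bar> \<le> 2 * int m" using kf_range[OF l] kf_range[OF l'] unfolding k2_def by auto
  have k1: "\<bar>k1\<bar> \<le> 2 * int m" using kf_range[OF l] kf_range[OF l'] unfolding k1_def by auto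
  have prod: "F l i * F l' i = (1/2) * cos (th * real_of_int k1 * real i + (phi l - phi l'))
      + (1/2) * cos (th * real_of_int k2 * real i + (phi l + phi l'))" for i
  proof -
    have "F l i * F l' i = (cos (th * real_of_int (int (kf l)) * real i + phi l - (th * real_of_int (int (kf l')) * real i + phi l'))
       + cos (th * real_of_int (int (kf l)) * real i + phi l + (th * real_of_int (int (kf l')) * real i + phi l'))) / 2"
      unfolding F_trig'[OF l] F_trig'[OF l'] cos_times_cos ..
    also have "th * real_of_int (int (kf l)) * real i + phi l - (th * real_of_int (int (kf l')) * real i + phi l')
      = th * real_of_int k1 * real i + (phi l - phi l')" unfolding k1_def by (simp add: algebra_simps)
    also have "th * real_of_int (int (kf l)) * real i + phi l + (th * real_of_int (int (kf l')) * real i + phi l')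
      = th * real_of_int k2 * real i + (phi l + phi l')" unfolding k2_def by (simp add: algebra_simps)
    finally show ?thesis by simp
  qed
  have Heq: "H n l l' = (1/2) * ((\<Sum>i=1..n. cos (th * real_of_int k1 * real i + (phi l - phi l'))) / real n)
     + (1/2) * ((\<Sum>i=1..n. cos (th * real_of_int k2 * real i + (phi l + phi l'))) / real n)" for n
    unfolding H_def G_def prod using sc_sq[of l l' n] l l'
    by (simp add: sum.distrib sum_distrib_left[symmetric] add_divide_distrib sum_divide_distrib[symmetric])
  have lim2: "(\<lambda>n. (\<Sum>i=1..n. cos (th * real_of_int k2 * real i + (phi l + phi l'))) / real n) \<longlonglongrightarrow> 0"
    by (rule trig_avg[OF k2])
  show ?thesis
  proof (cases "kf l = kf l'")
    case True
    then have "k1 = 0" unfolding k1_def by simp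
    then have lim1: "(\<lambda>n. (\<Sum>i=1..n. cos (th * real_of_int k1 * real i + (phi l - phi l'))) / real n) \<longlonglongrightarrow> cos (phi l - phi l')"
      using trig_avg0 by simp
    have "Hlim l l' = (1/2) * cos (phi l - phi l') + (1/2) * 0"
    proof (cases "l = l'")
      case True then show ?thesis using l by (simp add: Hlim_def)
    next
      case False then show ?thesis using l l' kf_eq_ph[OF l l' False \<open>kf l = kf l'\<close>] by (simp add: Hlim_def)
    qed
    then show ?thesis unfolding Heq by (simp only:) (intro tendsto_intros lim1 lim2)
  next
    case False
    then have "k1 \<noteq> 0" unfolding k1_def by simp
    then have lim1: "(\<lambda>n. (\<Sum>i=1..n. cos (th * real_of_int k1 * real i + (phi l - phi l'))) / real n) \<longlonglongrightarrow> 0"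
      using trig_avg k1 by simp
    have "Hlim l l' = (1/2) * 0 + (1/2) * 0" using False l l' by (auto simp: Hlim_def)
    then show ?thesis unfolding Heq by (simp only:) (intro tendsto_intros lim1 lim2)
  qed
qed

lemma H_lim: assumes "l < 2*m+2" "l' < 2*m+2" shows "(\<lambda>n. H n l l') \<longlonglongrightarrow> Hlim l l'"
proof -
  have main: "(\<lambda>n. H n l l') \<longlonglongrightarrow> Hlim l l'" if hyp: "l \<le> l'" "l < 2*m+2" "l' < 2*m+2" for l l'
  proof -
    have cl: "l = 0 \<or> l = 1 \<or> 2 \<le> l" and cl': "l' = 0 \<or> l' = 1 \<or> 2 \<le> l'" by arith+
    show ?thesis
    proof (cases "2 \<le> l")
      case True then show ?thesis using Htt[of l l'] hyp by simp
    next
      case False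
      show ?thesis
      proof (cases "l = 0")
        case l0: True
        show ?thesis
        proof (cases "2 \<le> l'")
          case True then show ?thesis using H0t[of l'] hyp l0 by (simp add: Hlim_def)
        next
          case False
          then have "l' = 0 \<or> l' = 1" by arith
          then show ?thesis using H00 H01 l0 by (auto simp: Hlim_def)
        qed
      next
        case l1: False
        with False have l1: "l = 1" by arith
        show ?thesis
        proof (cases "2 \<le> l'")
          case True then show ?thesis using H1t[of l'] hyp l1 by (simp add: Hlim_def)
        next
          case False
          then have "l' = 1" using hyp l1 by arith
          then show ?thesis using H11 l1 by (simp add: Hlim_def)
        qed
      qed
    qed
  qed
  show ?thesis
  proof (cases "l \<le> l'")
    case True then show ?thesis using main assms by blast
  next
    case False
    then have "(\<lambda>n. H n l' l) \<longlonglongrightarrow> Hlim l' l" using main assms by simp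
    then show ?thesis by (simp add: H_sym Hlim_sym)
  qed
qed

end


lemma sum_split01: "(2::nat) \<le> p \<Longrightarrow> (\<Sum>l<p. g l) = g 0 + g 1 + (\<Sum>l\<in>{2..<p}. g l)"
proof -
  assume "2 \<le> p"
  then have "{..<p} = insert 0 (insert 1 {2..<p})" by auto
  then show ?thesis by (simp add: add.assoc)
qed

lemma quad_ineq: "(v0::real) * v0 + v0 * v1 + v1 * v1 / 3 \<ge> (v0 * v0 + v1 * v1) / 20"
proof -
  have "v0 * v0 + v0 * v1 + v1 * v1 / 3 - (v0 * v0 + v1 * v1) / 20 = (19 * v0 + 10 * v1) * (19 * v0 + 10 * v1) / 380 + 23 / 1140 * (v1 * v1)"
    by (simp add: field_simps)
  moreover have "0 \<le> (19 * v0 + 10 * v1) * (19 * v0 + 10 * v1)" "0 \<le> v1 * v1" by simp_all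
  ultimately show ?thesis by linarith
qed

context regs begin

definition pp :: nat where "pp = 2*m+2"
lemma pp2: "2 \<le> pp" by (simp add: pp_def)

definition Q where "Q n e = (\<Sum>i=1..n. (\<Sum>l<pp. e l * F l i)\<^sup>2)"

lemma Q_expand: "Q n e = (\<Sum>l<pp. \<Sum>l'<pp. e l * e l' * G n l l')"
proof -
  have "Q n e = (\<Sum>i=1..n. \<Sum>l<pp. \<Sum>l'<pp. e l * e l' * (F l i * F l' i))"
    unfolding Q_def power2_eq_square sum_product by (simp only: mult_ac)
  also have "\<dots> = (\<Sum>l<pp. \<Sum>i=1..n. \<Sum>l'<pp. e l * e l' * (F l i * F l' i))"
    by (rule sum.swap)
  also have "\<dots> = (\<Sum>l<pp. \<Sum>l'<pp. \<Sum>i=1..n. e l * e l' * (F l i * F l' i))"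
    by (rule sum.cong[OF refl], rule sum.swap)
  also have "\<dots> = (\<Sum>l<pp. \<Sum>l'<pp. e l * e l' * G n l l')"
    unfolding G_def sum_distrib_left ..
  finally show ?thesis .
qed

lemma Hlim_form:
  "(\<Sum>l<pp. \<Sum>l'<pp. v l * v l' * Hlim l l') \<ge> (1/20) * (\<Sum>l<pp. (v l)\<^sup>2)"
proof -
  have p2: "(2::nat) \<le> pp" by (rule pp2)
  have inner_big: "(\<Sum>l'<pp. v l * v l' * Hlim l l') = v l * v l / 2" if "l \<in> {2..<pp}" for l
  proof -
    have "(\<Sum>l'<pp. v l * v l' * Hlim l l') = (\<Sum>l'<pp. if l' = l then v l * v l / 2 else 0)"
      using that by (intro sum.cong) (auto simp: Hlim_def)
    also have "\<dots> = v l * v l / 2" using that by simp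
    finally show ?thesis .
  qed
  have inner0: "(\<Sum>l'<pp. v 0 * v l' * Hlim 0 l') = v 0 * v 0 + v 0 * v 1 / 2"
    unfolding sum_split01[OF p2] by (simp add: Hlim_def)
  have inner1: "(\<Sum>l'<pp. v 1 * v l' * Hlim 1 l') = v 1 * v 0 / 2 + v 1 * v 1 / 3"
    unfolding sum_split01[OF p2] by (simp add: Hlim_def)
  have big: "(\<Sum>l\<in>{2..<pp}. \<Sum>l'<pp. v l * v l' * Hlim l l') = (\<Sum>l\<in>{2..<pp}. v l * v l / 2)"
    by (rule sum.cong[OF refl inner_big])
  define A where "A = (\<Sum>l\<in>{2..<pp}. v l * v l)"
  have big2: "(\<Sum>l\<in>{2..<pp}. v l * v l / 2) = A / 2"
    unfolding A_def by (simp add: sum_divide_distrib)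
  have e1: "(\<Sum>l<pp. \<Sum>l'<pp. v l * v l' * Hlim l l') = (v 0 * v 0 + v 0 * v 1 / 2) + (v 1 * v 0 / 2 + v 1 * v 1 / 3) + A / 2"
    unfolding sum_split01[OF p2, of "\<lambda>l. \<Sum>l'<pp. v l * v l' * Hlim l l'"] inner0 inner1 big big2 ..
  have e2: "(\<Sum>l<pp. (v l)\<^sup>2) = v 0 * v 0 + v 1 * v 1 + A"
    unfolding sum_split01[OF p2] A_def by (simp add: power2_eq_square)
  have A0: "0 \<le> A" unfolding A_def by (intro sum_nonneg) simp
  have q: "(v 0 * v 0 + v 1 * v 1) / 20 \<le> v 0 * v 0 + v 0 * v 1 + v 1 * v 1 / 3" by (rule quad_ineq)
  have "(1/20) * (\<Sum>l<pp. (v l)\<^sup>2) = (v 0 * v 0 + v 1 * v 1) / 20 + A / 20" unfolding e2 by simp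
  also have "\<dots> \<le> (v 0 * v 0 + v 0 * v 1 + v 1 * v 1 / 3) + A / 2" using q A0 by linarith
  also have "\<dots> = (\<Sum>l<pp. \<Sum>l'<pp. v l * v l' * Hlim l l')" unfolding e1 by (simp add: algebra_simps)
  finally show ?thesis .
qed

end


lemma prod_le_sumsq: "\<bar>a\<bar> * \<bar>b\<bar> \<le> ((a::real)\<^sup>2 + b\<^sup>2) / 2"
proof -
  have "0 \<le> (\<bar>a\<bar> - \<bar>b\<bar>)\<^sup>2" by simp
  then show ?thesis by (simp add: power2_eq_square algebra_simps)
qed

context regs begin

lemma sc_pos: "n > 0 \<Longrightarrow> sc n l > 0"
  using apos by (simp add: sc_def)

lemma K: "\<exists>N>0. \<forall>n\<ge>N. \<forall>e. Q n e \<ge> (1/40) * (\<Sum>l<pp. (e l * sc n l)\<^sup>2)"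
proof -
  define Dn where "Dn n = (\<Sum>l<pp. \<Sum>l'<pp. \<bar>H n l l' - Hlim l l'\<bar>)" for n
  have "(\<lambda>n. Dn n) \<longlonglongrightarrow> (\<Sum>l<pp. \<Sum>l'<pp. \<bar>Hlim l l' - Hlim l l'\<bar>)"
    unfolding Dn_def
    by (intro tendsto_sum tendsto_rabs tendsto_diff tendsto_const H_lim) (auto simp: pp_def)
  then have "Dn \<longlonglongrightarrow> 0" by simp
  then have "\<forall>\<^sub>F n in sequentially. Dn n < 1/40" by (rule order_tendstoD) simp
  moreover have "\<forall>\<^sub>F n in sequentially. n > 0" by (rule eventually_gt_at_top)
  ultimately have "\<forall>\<^sub>F n in sequentially. Dn n < 1/40 \<and> n > 0" by eventually_elim simp
  then obtain N where N: "\<And>n. n \<ge> N \<Longrightarrow> Dn n < 1/40 \<and> n > 0" by (auto simp: eventually_sequentially)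
  have "Q n e \<ge> (1/40) * (\<Sum>l<pp. (e l * sc n l)\<^sup>2)" if n: "n \<ge> N" for n e
  proof -
    define v where "v l = e l * sc n l" for l
    define S where "S = (\<Sum>l<pp. (v l)\<^sup>2)"
    have npos: "n > 0" and Dn: "Dn n < 1/40" using N[OF n] by auto
    have S0: "0 \<le> S" unfolding S_def by (intro sum_nonneg) simp
    have vS: "(v l)\<^sup>2 \<le> S" if "l < pp" for l
      unfolding S_def by (rule member_le_sum) (use that in auto)
    have vv: "\<bar>v l\<bar> * \<bar>v l'\<bar> \<le> S" if "l < pp" "l' < pp" for l l'
    proof -
      have "((v l)\<^sup>2 + (v l')\<^sup>2) / 2 \<le> S" using vS[OF that(1)] vS[OF that(2)] by simp
      then show ?thesis using prod_le_sumsq[of "v l" "v l'"] by (rule order_trans[rotated])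
    qed
    have "Q n e = (\<Sum>l<pp. \<Sum>l'<pp. v l * v l' * H n l l')"
      unfolding Q_expand
    proof (intro sum.cong refl)
      fix l l'
      have "sc n l > 0" "sc n l' > 0" using sc_pos[OF npos] by auto
      then show "e l * e l' * G n l l' = v l * v l' * H n l l'"
        unfolding v_def H_def by (simp add: field_simps)
    qed
    also have "\<dots> = (\<Sum>l<pp. \<Sum>l'<pp. v l * v l' * Hlim l l') + (\<Sum>l<pp. \<Sum>l'<pp. v l * v l' * (H n l l' - Hlim l l'))"
      by (simp add: sum.distrib[symmetric] algebra_simps)
    finally have Qeq: "Q n e = (\<Sum>l<pp. \<Sum>l'<pp. v l * v l' * Hlim l l') + (\<Sum>l<pp. \<Sum>l'<pp. v l * v l' * (H n l l' - Hlim l l'))" .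
    have "\<bar>\<Sum>l<pp. \<Sum>l'<pp. v l * v l' * (H n l l' - Hlim l l')\<bar> \<le> (\<Sum>l<pp. \<Sum>l'<pp. S * \<bar>H n l l' - Hlim l l'\<bar>)"
    proof -
      have "\<bar>\<Sum>l<pp. \<Sum>l'<pp. v l * v l' * (H n l l' - Hlim l l')\<bar> \<le> (\<Sum>l<pp. \<bar>\<Sum>l'<pp. v l * v l' * (H n l l' - Hlim l l')\<bar>)"
        by (rule sum_abs)
      also have "\<dots> \<le> (\<Sum>l<pp. \<Sum>l'<pp. \<bar>v l * v l' * (H n l l' - Hlim l l')\<bar>)"
        by (intro sum_mono sum_abs)
      also have "\<dots> \<le> (\<Sum>l<pp. \<Sum>l'<pp. S * \<bar>H n l l' - Hlim l l'\<bar>)"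
      proof (intro sum_mono)
        fix l l' assume "l \<in> {..<pp}" "l' \<in> {..<pp}"
        then have "\<bar>v l\<bar> * \<bar>v l'\<bar> \<le> S" using vv by auto
        then show "\<bar>v l * v l' * (H n l l' - Hlim l l')\<bar> \<le> S * \<bar>H n l l' - Hlim l l'\<bar>"
          by (simp add: abs_mult mult_right_mono)
      qed
      finally show ?thesis .
    qed
    also have "\<dots> = S * Dn n" unfolding Dn_def by (simp add: sum_distrib_left)
    also have "\<dots> \<le> S * (1/40)" using Dn S0 by (intro mult_left_mono) auto
    finally have err: "\<bar>\<Sum>l<pp. \<Sum>l'<pp. v l * v l' * (H n l l' - Hlim l l')\<bar> \<le> S / 40" by simp
    have "(1/20) * S \<le> (\<Sum>l<pp. \<Sum>l'<pp. v l * v l' * Hlim l l')" unfolding S_def by (rule Hlim_form)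
    with err Qeq show ?thesis unfolding S_def[symmetric] v_def[symmetric] by linarith
  qed
  moreover have "N > 0" using N[of N] by simp
  ultimately show ?thesis by blast
qed

end


definition Eop :: "real \<Rightarrow> (nat \<Rightarrow> real) \<Rightarrow> nat \<Rightarrow> real" where
  "Eop t u i = u (i+2) - 2 * cos t * u (i+1) + u i"

fun compE :: "real list \<Rightarrow> (nat \<Rightarrow> real) \<Rightarrow> nat \<Rightarrow> real" where
  "compE [] u = u"
| "compE (t # ts) u = compE ts (Eop t u)"

lemma comp_vanish:
  "(\<forall>i\<ge>1. compE ts u i = 0) \<Longrightarrow> (\<forall>i. 1 \<le> i \<and> i \<le> 2 * length ts \<longrightarrow> u i = 0) \<Longrightarrow> \<forall>i\<ge>1. u i = 0"
proof (induction ts arbitrary: u)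
  case Nil then show ?case by simp
next
  case (Cons t ts)
  define v where "v = Eop t u"
  have "\<forall>i\<ge>1. compE ts v i = 0" using Cons.prems(1) by (simp add: v_def)
  moreover have "\<forall>i. 1 \<le> i \<and> i \<le> 2 * length ts \<longrightarrow> v i = 0"
    using Cons.prems(2) by (simp add: v_def Eop_def)
  ultimately have v0: "\<forall>i\<ge>1. v i = 0" by (rule Cons.IH)
  have u12: "u 1 = 0" "u 2 = 0" using Cons.prems(2) by auto
  have "u i = 0" if "i \<ge> 1" for i
    using that
  proof (induction i rule: less_induct)
    case (less i)
    show ?case
    proof (cases "i \<le> 2")
      case True
      then have "i = 1 \<or> i = 2" using less.prems by arith
      then show ?thesis using u12 by auto
    next
      case False
      define j where "j = i - 2"
      have j: "i = j + 2" "j \<ge> 1" using False unfolding j_def by arith+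
      have "v j = 0" using v0 j by auto
      moreover have "u j = 0" "u (j+1) = 0" using less.IH j by auto
      ultimately show ?thesis unfolding v_def Eop_def j(1) by simp
    qed
  qed
  then show ?case by blast
qed

lemma Eop_zero: "Eop t (\<lambda>i. 0) = (\<lambda>i. 0)"
  by (rule ext) (simp add: Eop_def)

lemma comp_zero: "compE ts (\<lambda>i. 0) = (\<lambda>i. 0)"
  by (induction ts) (simp_all add: Eop_zero)

lemma Eop_add: "Eop t (\<lambda>i. u i + w i) = (\<lambda>i. Eop t u i + Eop t w i)"
  by (rule ext) (simp add: Eop_def algebra_simps)

lemma comp_add: "compE ts (\<lambda>i. u i + w i) = (\<lambda>i. compE ts u i + compE ts w i)"
  by (induction ts arbitrary: u w) (simp_all add: Eop_add)

lemma comp_sum: "finite L \<Longrightarrow> compE ts (\<lambda>i. \<Sum>l\<in>L. g l i) = (\<lambda>i. \<Sum>l\<in>L. compE ts (g l) i)"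
proof (induction L rule: finite_induct)
  case empty then show ?case by (simp add: comp_zero)
next
  case (insert l L)
  then show ?case by (simp add: comp_add)
qed

lemma Eop_cos: "Eop t (\<lambda>i. c * cos (s * real i + f)) = (\<lambda>i. (2 * (cos s - cos t) * c) * cos (s * real i + (s + f)))"
proof
  fix i
  have "cos (s * real (i+2) + f) + cos (s * real i + f) = 2 * cos (s * real i + (s + f)) * cos s"
  proof -
    have "cos (s * real (i+2) + f) + cos (s * real i + f)
      = 2 * cos (((s * real (i+2) + f) + (s * real i + f)) / 2) * cos (((s * real (i+2) + f) - (s * real i + f)) / 2)"
      by (rule cos_plus_cos)
    also have "((s * real (i+2) + f) + (s * real i + f)) / 2 = s * real i + (s + f)" by (simp add: algebra_simps)
    also have "((s * real (i+2) + f) - (s * real i + f)) / 2 = s" by (simp add: algebra_simps)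
    finally show ?thesis .
  qed
  moreover have "s * real (i+1) + f = s * real i + (s + f)" by (simp add: algebra_simps)
  ultimately show "Eop t (\<lambda>i. c * cos (s * real i + f)) i = (2 * (cos s - cos t) * c) * cos (s * real i + (s + f))"
    unfolding Eop_def by (simp add: algebra_simps, metis distrib_left)
qed

lemma comp_cos: "s \<in> set ts \<Longrightarrow> compE ts (\<lambda>i. c * cos (s * real i + f)) = (\<lambda>i. 0)"
proof (induction ts arbitrary: c f)
  case Nil then show ?case by simp
next
  case (Cons t ts)
  show ?case
  proof (cases "t = s")
    case True
    then show ?thesis by (simp add: Eop_cos comp_zero)
  next
    case False
    then have "s \<in> set ts" using Cons.prems by simp
    then show ?thesis by (simp add: Eop_cos Cons.IH)
  qed
qed

lemma Eop_aff: "Eop 0 (\<lambda>i. c0 + c1 * real i) = (\<lambda>i. 0)"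
  by (rule ext) (simp add: Eop_def algebra_simps)


context regs begin

definition ts where "ts = 0 # map (\<lambda>k. th * real k) [1..<m+1]"

lemma F_trig2: "2 \<le> l \<Longrightarrow> l < pp \<Longrightarrow> F l i = cos (th * real (kf l) * real i + phi l)"
  using F_trig' unfolding pp_def by simp

lemma u_decomp: "(\<lambda>i. \<Sum>l<pp. e l * F l i) = (\<lambda>i. ((e 0 + e 1 * a0) + (e 1 * a) * real i) + (\<Sum>l\<in>{2..<pp}. e l * cos (th * real (kf l) * real i + phi l)))"
proof
  fix i
  have "(\<Sum>l\<in>{2..<pp}. e l * F l i) = (\<Sum>l\<in>{2..<pp}. e l * cos (th * real (kf l) * real i + phi l))"
    by (rule sum.cong) (auto simp: F_trig2)
  then show "(\<Sum>l<pp. e l * F l i) = ((e 0 + e 1 * a0) + (e 1 * a) * real i) + (\<Sum>l\<in>{2..<pp}. e l * cos (th * real (kf l) * real i + phi l))"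
    unfolding sum_split01[OF pp2] using xdef by (simp add: F0 F1 algebra_simps)
qed

lemma comp_u: "compE ts (\<lambda>i. \<Sum>l<pp. e l * F l i) = (\<lambda>i. 0)"
proof -
  have aff: "compE ts (\<lambda>i. (e 0 + e 1 * a0) + (e 1 * a) * real i) = (\<lambda>i. 0)"
    unfolding ts_def compE.simps Eop_aff comp_zero ..
  have trig: "compE ts (\<lambda>i. \<Sum>l\<in>{2..<pp}. e l * cos (th * real (kf l) * real i + phi l)) = (\<lambda>i. 0)"
  proof -
    have "compE ts (\<lambda>i. \<Sum>l\<in>{2..<pp}. e l * cos (th * real (kf l) * real i + phi l))
        = (\<lambda>i. \<Sum>l\<in>{2..<pp}. compE ts (\<lambda>i. e l * cos (th * real (kf l) * real i + phi l)) i)"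
      by (rule comp_sum) simp
    also have "\<dots> = (\<lambda>i. \<Sum>l\<in>{2..<pp}. 0)"
    proof (intro ext sum.cong refl)
      fix i l assume l: "l \<in> {2..<pp}"
      then have "1 \<le> kf l \<and> kf l \<le> m" using kf_range[of l] unfolding pp_def by auto
      then have "th * real (kf l) \<in> set ts" unfolding ts_def by auto
      then show "compE ts (\<lambda>i. e l * cos (th * real (kf l) * real i + phi l)) i = 0"
        by (simp add: comp_cos)
    qed
    finally show ?thesis by simp
  qed
  have "compE ts (\<lambda>i. ((e 0 + e 1 * a0) + (e 1 * a) * real i) + (\<Sum>l\<in>{2..<pp}. e l * cos (th * real (kf l) * real i + phi l)))
    = (\<lambda>i. compE ts (\<lambda>i. (e 0 + e 1 * a0) + (e 1 * a) * real i) i + compE ts (\<lambda>i. \<Sum>l\<in>{2..<pp}. e l * cos (th * real (kf l) * real i + phi l)) i)"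
    by (rule comp_add)
  then show ?thesis unfolding u_decomp aff trig by simp
qed

lemma vanish_all:
  assumes "\<forall>i\<in>{1..pp}. (\<Sum>l<pp. e l * F l i) = 0"
  shows "\<forall>i\<ge>1. (\<Sum>l<pp. e l * F l i) = 0"
proof -
  have len: "2 * length ts = pp" unfolding ts_def pp_def by simp
  show ?thesis
    by (rule comp_vanish[of ts]) (use comp_u assms len in auto)
qed

lemma inj:
  assumes n: "n \<ge> pp" and z: "\<forall>i\<in>{1..n}. (\<Sum>l<pp. e l * F l i) = 0"
  shows "\<forall>l<pp. e l = 0"
proof -
  have all: "\<forall>i\<ge>1. (\<Sum>l<pp. e l * F l i) = 0"
    by (rule vanish_all) (use z n in auto)
  obtain N where N: "N > 0" "\<forall>n\<ge>N. \<forall>e. Q n e \<ge> (1/40) * (\<Sum>l<pp. (e l * sc n l)\<^sup>2)" using K by blast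
  have "Q N e = 0" unfolding Q_def using all by simp
  then have "(\<Sum>l<pp. (e l * sc N l)\<^sup>2) \<le> 0" using N(2)[rule_format, of N e] by simp
  moreover have "0 \<le> (\<Sum>l<pp. (e l * sc N l)\<^sup>2)" by (intro sum_nonneg) simp
  ultimately have "(\<Sum>l<pp. (e l * sc N l)\<^sup>2) = 0" by linarith
  then have "\<forall>l<pp. (e l * sc N l)\<^sup>2 = 0" by (subst (asm) sum_nonneg_eq_0_iff) auto
  then show ?thesis using sc_pos[OF N(1)] by (metis mult_eq_0_iff less_irrefl power_zero_numeral zero_eq_power2)
qed

end


lemma mat_apply_eq:
  assumes "l < p" "w \<in> carrier_vec p"
  shows "(mat p p (\<lambda>(l,j). M l j) *\<^sub>v w) $ l = (\<Sum>j<p. M l j * w $ j)"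
  using assms by (simp add: scalar_prod_def row_def atLeast0LessThan)

lemma solve_exists:
  fixes M :: "nat \<Rightarrow> nat \<Rightarrow> real"
  assumes inj: "\<And>v. (\<forall>l<p. (\<Sum>j<p. M l j * v j) = 0) \<Longrightarrow> (\<forall>j<p. v j = 0)"
  shows "\<exists>v. \<forall>l<p. (\<Sum>j<p. M l j * v j) = r l"
proof -
  define A where "A = mat p p (\<lambda>(l,j). M l j)"
  have A: "A \<in> carrier_mat p p" unfolding A_def by simp
  have "det A \<noteq> 0"
  proof
    assume "det A = 0"
    then obtain w where w: "w \<in> carrier_vec p" "w \<noteq> 0\<^sub>v p" "A *\<^sub>v w = 0\<^sub>v p"
      using det_0_iff_vec_prod_zero_field[OF A] by blast
    have "\<forall>l<p. (\<Sum>j<p. M l j * w $ j) = 0"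
    proof (intro allI impI)
      fix l assume l: "l < p"
      have "(A *\<^sub>v w) $ l = 0" using w(3) l by simp
      then show "(\<Sum>j<p. M l j * w $ j) = 0" unfolding A_def using mat_apply_eq[OF l w(1)] by simp
    qed
    then have "\<forall>j<p. w $ j = 0" by (rule inj)
    then have "w = 0\<^sub>v p" using w(1) by (intro eq_vecI) auto
    with w(2) show False by simp
  qed
  then have "A \<in> Units (ring_mat TYPE(real) p ())" by (rule det_non_zero_imp_unit[OF A])
  then obtain B where B: "B \<in> carrier_mat p p" "A * B = 1\<^sub>m p" by (auto simp: Units_def ring_mat_def)
  define w where "w = B *\<^sub>v vec p r"
  have w: "w \<in> carrier_vec p" unfolding w_def using B by simp
  have "A *\<^sub>v w = vec p r" unfolding w_def
    using assoc_mult_mat_vec[OF A B(1), of "vec p r"] B(2) by simp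
  then have "\<forall>l<p. (\<Sum>j<p. M l j * w $ j) = r l"
  proof (intro allI impI)
    fix l assume l: "l < p" and e: "A *\<^sub>v w = vec p r"
    have "(A *\<^sub>v w) $ l = r l" unfolding e using l by simp
    then show "(\<Sum>j<p. M l j * w $ j) = r l" using mat_apply_eq[OF l w] unfolding A_def by simp
  qed
  then show ?thesis by blast
qed

context regs begin

definition supp :: "(nat \<Rightarrow> real) \<Rightarrow> bool" where "supp b = (\<forall>j\<ge>pp. b j = 0)"
definition fit where "fit b i = (\<Sum>j<pp. b j * F j i)"
definition NE where "NE n y b = (\<forall>l<pp. (\<Sum>i=1..n. F l i * (y i - fit b i)) = 0)"

lemma RSS_eq: "RSS m mu1 x y n b = (\<Sum>i=1..n. (y i - fit b i)\<^sup>2)"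
  unfolding RSS_def fit_def F_def pp_def by (simp add: mult.commute)

lemma fit_diff: "fit c i - fit b i = fit (\<lambda>j. c j - b j) i"
  unfolding fit_def by (simp add: sum_subtractf[symmetric] algebra_simps)

lemma RSS_decomp:
  assumes "NE n y b"
  shows "RSS m mu1 x y n c = RSS m mu1 x y n b + (\<Sum>i=1..n. (fit (\<lambda>j. c j - b j) i)\<^sup>2)"
proof -
  define d where "d = (\<lambda>j. c j - b j)"
  have cross: "(\<Sum>i=1..n. (y i - fit b i) * fit d i) = 0"
  proof -
    have "(\<Sum>i=1..n. (y i - fit b i) * fit d i) = (\<Sum>i=1..n. \<Sum>j<pp. d j * (F j i * (y i - fit b i)))"
      unfolding fit_def[of d] by (simp add: sum_distrib_left mult_ac)
    also have "\<dots> = (\<Sum>j<pp. d j * (\<Sum>i=1..n. F j i * (y i - fit b i)))"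
      by (subst sum.swap) (simp add: sum_distrib_left)
    also have "\<dots> = 0" using assms unfolding NE_def by simp
    finally show ?thesis .
  qed
  have "RSS m mu1 x y n c = (\<Sum>i=1..n. ((y i - fit b i) - fit d i)\<^sup>2)"
    unfolding RSS_eq d_def using fit_diff[of c _ b] by (simp add: algebra_simps)
  also have "\<dots> = (\<Sum>i=1..n. (y i - fit b i)\<^sup>2 - 2 * ((y i - fit b i) * fit d i) + (fit d i)\<^sup>2)"
    by (rule sum.cong) (simp_all add: power2_diff)
  also have "\<dots> = (\<Sum>i=1..n. (y i - fit b i)\<^sup>2) - 2 * (\<Sum>i=1..n. (y i - fit b i) * fit d i) + (\<Sum>i=1..n. (fit d i)\<^sup>2)"
    by (simp add: sum.distrib sum_subtractf sum_distrib_left)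
  finally have X: "RSS m mu1 x y n c = (\<Sum>i=1..n. (y i - fit b i)\<^sup>2) - 2 * (\<Sum>i=1..n. (y i - fit b i) * fit d i) + (\<Sum>i=1..n. (fit d i)\<^sup>2)" .
  show ?thesis using X cross unfolding RSS_eq d_def by simp
qed

lemma NE_exists:
  assumes n: "n \<ge> pp"
  shows "\<exists>b. supp b \<and> NE n y b"
proof -
  define M where "M l j = (\<Sum>i=1..n. F l i * F j i)" for l j
  have "\<exists>v. \<forall>l<pp. (\<Sum>j<pp. M l j * v j) = (\<Sum>i=1..n. F l i * y i)"
  proof (rule solve_exists)
    fix v assume h: "\<forall>l<pp. (\<Sum>j<pp. M l j * v j) = 0"
    have "(\<Sum>i=1..n. (fit v i)\<^sup>2) = (\<Sum>l<pp. v l * (\<Sum>j<pp. M l j * v j))"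
      unfolding fit_def Q_def[symmetric] Q_expand M_def G_def sum_distrib_left
      by (simp add: sum_distrib_left mult_ac)
    also have "\<dots> = 0" using h by simp
    finally have "(\<Sum>i=1..n. (fit v i)\<^sup>2) = 0" .
    then have "\<forall>i\<in>{1..n}. (fit v i)\<^sup>2 = 0" by (subst (asm) sum_nonneg_eq_0_iff) auto
    then have "\<forall>i\<in>{1..n}. (\<Sum>l<pp. v l * F l i) = 0" unfolding fit_def by simp
    then show "\<forall>j<pp. v j = 0" using inj[OF n] by blast
  qed
  then obtain v where v: "\<forall>l<pp. (\<Sum>j<pp. M l j * v j) = (\<Sum>i=1..n. F l i * y i)" by blast
  define b where "b j = (if j < pp then v j else 0)" for j
  have "supp b" unfolding supp_def b_def by simp
  moreover have "NE n y b" unfolding NE_def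
  proof (intro allI impI)
    fix l assume l: "l < pp"
    have "(\<Sum>i=1..n. F l i * fit b i) = (\<Sum>j<pp. M l j * v j)"
      unfolding fit_def M_def b_def sum_distrib_left sum_distrib_right
      by (subst sum.swap) (rule sum.cong[OF refl], rule sum.cong[OF refl], simp add: mult_ac)
    then show "(\<Sum>i=1..n. F l i * (y i - fit b i)) = 0"
      using v l by (simp add: right_diff_distrib sum_subtractf)
  qed
  ultimately show ?thesis by blast
qed

lemma fit_zero_imp:
  assumes n: "n \<ge> pp" and s: "(\<Sum>i=1..n. (fit d i)\<^sup>2) = 0"
  shows "\<forall>j<pp. d j = 0"
proof -
  have "\<forall>i\<in>{1..n}. (fit d i)\<^sup>2 = 0" using s by (subst (asm) sum_nonneg_eq_0_iff) auto
  then have "\<forall>i\<in>{1..n}. (\<Sum>l<pp. d l * F l i) = 0" unfolding fit_def by simp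
  then show ?thesis using inj[OF n] by blast
qed

lemma OLS_char:
  assumes n: "n \<ge> pp" and b: "supp b" "NE n y b"
  shows "OLS m mu1 x y n = b"
proof -
  have P: "(\<forall>j\<ge>2*m+2. b j = 0) \<and> (\<forall>c. (\<forall>j\<ge>2*m+2. c j = 0) \<longrightarrow> RSS m mu1 x y n b \<le> RSS m mu1 x y n c)"
  proof (intro conjI allI impI)
    show "\<And>j. 2*m+2 \<le> j \<Longrightarrow> b j = 0" using b(1) unfolding supp_def pp_def by simp
    fix c
    have "0 \<le> (\<Sum>i=1..n. (fit (\<lambda>j. c j - b j) i)\<^sup>2)" by (intro sum_nonneg) simp
    then show "RSS m mu1 x y n b \<le> RSS m mu1 x y n c" using RSS_decomp[OF b(2), of c] by linarith
  qed
  show ?thesis unfolding OLS_def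
  proof (rule the_equality)
    show "(\<forall>j\<ge>2*m+2. b j = 0) \<and> (\<forall>c. (\<forall>j\<ge>2*m+2. c j = 0) \<longrightarrow> RSS m mu1 x y n b \<le> RSS m mu1 x y n c)" by (rule P)
  next
    fix c assume c: "(\<forall>j\<ge>2*m+2. c j = 0) \<and> (\<forall>c'. (\<forall>j\<ge>2*m+2. c' j = 0) \<longrightarrow> RSS m mu1 x y n c \<le> RSS m mu1 x y n c')"
    then have "RSS m mu1 x y n c \<le> RSS m mu1 x y n b" using P by blast
    moreover have "0 \<le> (\<Sum>i=1..n. (fit (\<lambda>j. c j - b j) i)\<^sup>2)" by (intro sum_nonneg) simp
    ultimately have "(\<Sum>i=1..n. (fit (\<lambda>j. c j - b j) i)\<^sup>2) = 0" using RSS_decomp[OF b(2), of c] by linarith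
    then have "\<forall>j<pp. c j - b j = 0" using fit_zero_imp[OF n] by blast
    then show "c = b"
    proof (intro ext)
      fix j assume d: "\<forall>j<pp. c j - b j = 0"
      show "c j = b j"
      proof (cases "j < pp")
        case True then show ?thesis using d by simp
      next
        case False then show ?thesis using c b(1) unfolding supp_def pp_def by simp
      qed
    qed
  qed
qed

lemma OLS_NE: "n \<ge> pp \<Longrightarrow> supp (OLS m mu1 x y n) \<and> NE n y (OLS m mu1 x y n)"
proof -
  assume n: "n \<ge> pp"
  obtain b where b: "supp b" "NE n y b" using NE_exists[OF n] by blast
  have "OLS m mu1 x y n = b" by (rule OLS_char[OF n b])
  then show ?thesis using b by simp
qed

end

context regs begin

lemma fit_lin: "fit (\<lambda>j. \<Sum>i\<in>A. y i * bb i j) k = (\<Sum>i\<in>A. y i * fit (bb i) k)"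
  unfolding fit_def sum_distrib_right sum_distrib_left
  by (subst sum.swap) (simp add: mult_ac)

lemma OLS_linear:
  assumes n: "n \<ge> pp"
  shows "OLS m mu1 x y n = (\<lambda>j. \<Sum>i=1..n. y i * OLS m mu1 x (\<lambda>k. if k = i then 1 else 0) n j)"
proof (rule OLS_char[OF n])
  define bb where "bb i = OLS m mu1 x (\<lambda>k. if k = i then 1 else 0) n" for i
  have bbNE: "supp (bb i) \<and> NE n (\<lambda>k. if k = i then 1 else 0) (bb i)" for i
    unfolding bb_def by (rule OLS_NE[OF n])
  show "supp (\<lambda>j. \<Sum>i=1..n. y i * OLS m mu1 x (\<lambda>k. if k = i then 1 else 0) n j)"
    using bbNE unfolding supp_def bb_def by simp
  show "NE n y (\<lambda>j. \<Sum>i=1..n. y i * OLS m mu1 x (\<lambda>k. if k = i then 1 else 0) n j)"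
    unfolding bb_def[symmetric] NE_def
  proof (intro allI impI)
    fix l assume l: "l < pp"
    have key: "(\<Sum>k=1..n. F l k * fit (bb i) k) = F l i" if i: "i \<in> {1..n}" for i
    proof -
      have "(\<Sum>k=1..n. F l k * ((if k = i then 1 else 0) - fit (bb i) k)) = 0"
        using bbNE[of i] l unfolding NE_def by blast
      then have "(\<Sum>k=1..n. F l k * fit (bb i) k) = (\<Sum>k=1..n. F l k * (if k = i then 1 else 0))"
        by (simp add: right_diff_distrib sum_subtractf)
      also have "\<dots> = F l i" using i by (simp add: if_distrib cong: if_cong)
      finally show ?thesis .
    qed
    have "(\<Sum>k=1..n. F l k * fit (\<lambda>j. \<Sum>i=1..n. y i * bb i j) k) = (\<Sum>i=1..n. y i * (\<Sum>k=1..n. F l k * fit (bb i) k))"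
      unfolding fit_lin sum_distrib_left by (subst sum.swap) (simp add: mult_ac)
    also have "\<dots> = (\<Sum>i=1..n. y i * F l i)"
    proof (rule sum.cong[OF refl])
      fix i assume "i \<in> {1..n}"
      then show "y i * (\<Sum>k=1..n. F l k * fit (bb i) k) = y i * F l i" using key[of i] by simp
    qed
    finally show "(\<Sum>k=1..n. F l k * (y k - fit (\<lambda>j. \<Sum>i=1..n. y i * bb i j) k)) = 0"
      by (simp add: right_diff_distrib sum_subtractf mult.commute)
  qed
qed

lemma err_identity:
  assumes n: "n \<ge> pp" and y: "\<forall>k\<in>{1..n}. y k = fit \<beta> k + d k"
  defines "e \<equiv> (\<lambda>j. OLS m mu1 x y n j - \<beta> j)"
  shows "(\<Sum>k=1..n. (fit e k)\<^sup>2) = (\<Sum>k=1..n. fit e k * d k)"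
proof -
  have NEb: "NE n y (OLS m mu1 x y n)" using OLS_NE[OF n] by blast
  have yd: "y k - fit (OLS m mu1 x y n) k = d k - fit e k" if "k \<in> {1..n}" for k
    using y that fit_diff[of "OLS m mu1 x y n" k \<beta>] unfolding e_def by simp
  have nl: "(\<Sum>k=1..n. F l k * (d k - fit e k)) = 0" if "l < pp" for l
  proof -
    have "(\<Sum>k=1..n. F l k * (d k - fit e k)) = (\<Sum>k=1..n. F l k * (y k - fit (OLS m mu1 x y n) k))"
      by (rule sum.cong) (simp_all add: yd)
    also have "\<dots> = 0" using NEb that unfolding NE_def by blast
    finally show ?thesis .
  qed
  have "(\<Sum>k=1..n. fit e k * (d k - fit e k)) = (\<Sum>l<pp. e l * (\<Sum>k=1..n. F l k * (d k - fit e k)))"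
    unfolding fit_def[of e] sum_distrib_right sum_distrib_left
    by (subst sum.swap) (simp add: mult_ac)
  also have "\<dots> = 0" using nl by simp
  finally show ?thesis by (simp add: right_diff_distrib sum_subtractf power2_eq_square)
qed

end

context regs begin

lemma y_repr:
  "bk + s * x i + (\<Sum>j=1..m. \<alpha> j * cos (mu1 * real j * x i) - \<gamma> j * sin (mu1 * real j * x i))
   = fit (param_vec m bk s \<alpha> \<gamma>) i"
proof -
  let ?b = "param_vec m bk s \<alpha> \<gamma>"
  have s1: "(\<Sum>l\<in>{2..<m+2}. ?b l * F l i) = (\<Sum>j=1..m. \<alpha> j * cos (mu1 * real j * x i))"
  proof -
    have "(\<Sum>l\<in>{2..<m+2}. ?b l * F l i) = (\<Sum>j\<in>{1..<m+1}. ?b (j+1) * F (j+1) i)"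
      using sum.shift_bounds_nat_ivl[of "\<lambda>l. ?b l * F l i" 1 1 "m+1"] by (simp add: numeral_2_eq_2)
    also have "\<dots> = (\<Sum>j\<in>{1..<m+1}. \<alpha> j * cos (mu1 * real j * x i))"
      by (intro sum.cong refl) (auto simp: param_vec_def F_def regressor_def)
    finally show ?thesis by (simp add: atLeastLessThanSuc_atLeastAtMost)
  qed
  have s2: "(\<Sum>l\<in>{m+2..<pp}. ?b l * F l i) = (\<Sum>j=1..m. - (\<gamma> j * sin (mu1 * real j * x i)))"
  proof -
    have e: "{m+2..<pp} = {1 + (m+1)..<(m+1) + (m+1)}" unfolding pp_def by auto
    have "(\<Sum>l\<in>{m+2..<pp}. ?b l * F l i) = (\<Sum>j\<in>{1..<m+1}. ?b (j+(m+1)) * F (j+(m+1)) i)"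
      unfolding e by (rule sum.shift_bounds_nat_ivl)
    also have "\<dots> = (\<Sum>j\<in>{1..<m+1}. - (\<gamma> j * sin (mu1 * real j * x i)))"
      by (intro sum.cong refl) (auto simp: param_vec_def F_def regressor_def)
    finally show ?thesis by (simp add: atLeastLessThanSuc_atLeastAtMost)
  qed
  have split: "(\<Sum>l\<in>{2..<pp}. ?b l * F l i) = (\<Sum>l\<in>{2..<m+2}. ?b l * F l i) + (\<Sum>l\<in>{m+2..<pp}. ?b l * F l i)"
    by (rule sum.atLeastLessThan_concat[symmetric]) (auto simp: pp_def)
  have "fit ?b i = ?b 0 * F 0 i + ?b 1 * F 1 i + (\<Sum>l\<in>{2..<pp}. ?b l * F l i)"
    unfolding fit_def by (rule sum_split01[OF pp2])
  also have "\<dots> = bk + s * x i + ((\<Sum>j=1..m. \<alpha> j * cos (mu1 * real j * x i)) + (\<Sum>j=1..m. - (\<gamma> j * sin (mu1 * real j * x i))))"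
    unfolding split s1 s2 by (simp add: param_vec_def F0 F1)
  also have "\<dots> = bk + s * x i + (\<Sum>j=1..m. \<alpha> j * cos (mu1 * real j * x i) - \<gamma> j * sin (mu1 * real j * x i))"
    by (simp add: sum.distrib[symmetric])
  finally show ?thesis by simp
qed

end

context regs begin

lemma vw_le: "(v::real) * w \<le> v\<^sup>2 / 80 + 20 * w\<^sup>2"
proof -
  have "0 \<le> (v - 40 * w)\<^sup>2" by simp
  then show ?thesis by (simp add: power2_eq_square algebra_simps)
qed

lemma err_bound:
  "\<exists>N1\<ge>pp. \<forall>n\<ge>N1. \<forall>y \<beta> d. (\<forall>k\<in>{1..n}. y k = fit \<beta> k + d k) \<longrightarrow>
     (\<Sum>j<pp. (OLS m mu1 x y n j - \<beta> j)\<^sup>2) \<le> 1600 / real n * (\<Sum>l<pp. (\<Sum>k=1..n. F l k * d k)\<^sup>2 / (sc n l)\<^sup>2)"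
proof -
  obtain N where N: "N > 0" "\<forall>n\<ge>N. \<forall>e. Q n e \<ge> (1/40) * (\<Sum>l<pp. (e l * sc n l)\<^sup>2)" using K by blast
  define N1 where "N1 = max (max N pp) (nat \<lceil>1/a\<rceil>)"
  have "\<forall>n\<ge>N1. \<forall>y \<beta> d. (\<forall>k\<in>{1..n}. y k = fit \<beta> k + d k) \<longrightarrow>
     (\<Sum>j<pp. (OLS m mu1 x y n j - \<beta> j)\<^sup>2) \<le> 1600 / real n * (\<Sum>l<pp. (\<Sum>k=1..n. F l k * d k)\<^sup>2 / (sc n l)\<^sup>2)"
  proof (intro allI impI)
    fix n y \<beta> d assume n: "N1 \<le> n" and y: "\<forall>k\<in>{1..n}. y k = fit \<beta> k + d k"
    have nN: "n \<ge> N" and np: "n \<ge> pp" and na: "real n \<ge> 1/a" using n unfolding N1_def by auto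
    have npos: "n > 0" using nN N(1) by simp
    define e where "e = (\<lambda>j. OLS m mu1 x y n j - \<beta> j)"
    define Z where "Z l = (\<Sum>k=1..n. F l k * d k)" for l
    define v where "v l = e l * sc n l" for l
    define w where "w l = Z l / sc n l" for l
    define V where "V = (\<Sum>l<pp. (v l)\<^sup>2)"
    define W where "W = (\<Sum>l<pp. (w l)\<^sup>2)"
    have scp: "sc n l > 0" for l using sc_pos[OF npos] .
    have scnz: "sc n l \<noteq> 0" for l using scp[of l] by simp
    have scsqp: "(sc n l)\<^sup>2 > 0" for l using scp[of l] by simp
    have Qe: "Q n e = (\<Sum>k=1..n. fit e k * d k)"
      unfolding Q_def fit_def[symmetric] e_def by (rule err_identity[OF np y])
    also have "\<dots> = (\<Sum>l<pp. e l * Z l)"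
      unfolding fit_def Z_def sum_distrib_right sum_distrib_left by (subst sum.swap) (simp add: mult_ac)
    also have "\<dots> = (\<Sum>l<pp. v l * w l)"
      by (intro sum.cong refl) (use scnz in \<open>simp add: v_def w_def\<close>)
    also have "\<dots> \<le> (\<Sum>l<pp. (v l)\<^sup>2 / 80 + 20 * (w l)\<^sup>2)" by (intro sum_mono vw_le)
    also have "\<dots> = V / 80 + 20 * W" unfolding V_def W_def by (simp add: sum.distrib sum_divide_distrib sum_distrib_left)
    finally have up: "Q n e \<le> V / 80 + 20 * W" .
    have low: "Q n e \<ge> V / 40" using N(2) nN unfolding V_def v_def by auto
    have VW: "V \<le> 1600 * W" using up low by linarith
    have scsq: "(sc n l)\<^sup>2 \<ge> real n" for l
    proof (cases "l = 1")
      case True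
      have an: "a * real n \<ge> 1" using na apos by (simp add: field_simps)
      then have "(a * real n)\<^sup>2 \<ge> 1" by (simp add: one_le_power)
      then have "(a * real n)\<^sup>2 * real n \<ge> 1 * real n" by (intro mult_right_mono) auto
      moreover have "(sc n l)\<^sup>2 = (a * real n)\<^sup>2 * real n" using True by (simp add: sc_def power_mult_distrib)
      ultimately show ?thesis by simp
    next
      case False then show ?thesis by (simp add: sc_def)
    qed
    have "(\<Sum>j<pp. (e j)\<^sup>2) = (\<Sum>l<pp. (v l)\<^sup>2 / (sc n l)\<^sup>2)"
      by (intro sum.cong refl) (use scnz in \<open>simp add: v_def power_mult_distrib\<close>)
    also have "\<dots> \<le> (\<Sum>l<pp. (v l)\<^sup>2 / real n)"
      by (intro sum_mono divide_left_mono) (use scsq npos scsqp in \<open>auto\<close>)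
    also have "\<dots> = V / real n" unfolding V_def by (simp add: sum_divide_distrib)
    also have "\<dots> \<le> 1600 * W / real n" using VW npos by (simp add: divide_right_mono)
    finally show "(\<Sum>j<pp. (OLS m mu1 x y n j - \<beta> j)\<^sup>2) \<le> 1600 / real n * (\<Sum>l<pp. (\<Sum>k=1..n. F l k * d k)\<^sup>2 / (sc n l)\<^sup>2)"
      unfolding e_def W_def w_def Z_def by (simp add: power_divide)
  qed
  moreover have "N1 \<ge> pp" unfolding N1_def by simp
  ultimately show ?thesis by blast
qed

end


lemma sets_ge: "g \<in> borel_measurable M \<Longrightarrow> {\<omega>\<in>space M. (c::real) \<le> g \<omega>} \<in> sets M"
proof -
  assume g: "g \<in> borel_measurable M"
  have "g -` {c..} \<inter> space M \<in> sets M" by (rule measurable_sets[OF g]) simp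
  moreover have "g -` {c..} \<inter> space M = {\<omega>\<in>space M. c \<le> g \<omega>}" by auto
  ultimately show ?thesis by simp
qed

theorem mainTheorem9:
  fixes M :: "'a measure" and m :: nat and h0 a0 a bk s :: real
    and \<alpha> \<gamma> :: "nat \<Rightarrow> real" and \<delta> :: "nat \<Rightarrow> 'a \<Rightarrow> real"
    and x :: "nat \<Rightarrow> real" and y :: "nat \<Rightarrow> 'a \<Rightarrow> real" and mu1 :: real
  assumes "prob_space M"
    and "h0 > 0" and "mu1 = 2 * pi / h0"
    and "a0 \<ge> 0" and "a > 0"
    and "\<forall>j\<in>{1..2*m}. a * real j / h0 \<notin> \<int>"
    and "\<forall>i. x i = a0 + a * real i"
    and "\<forall>i \<omega>. y i \<omega> = bk + s * x i
           + (\<Sum>j=1..m. \<alpha> j * cos (mu1 * real j * x i) - \<gamma> j * sin (mu1 * real j * x i))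
           + \<delta> i \<omega>"
    and "\<forall>i\<ge>1. \<delta> i \<in> borel_measurable M"
    and "\<forall>i\<ge>1. integrable M (\<delta> i) \<and> (\<integral>\<omega>. \<delta> i \<omega> \<partial>M) = 0"
    and "\<forall>i\<ge>1. integrable M (\<lambda>\<omega>. (\<delta> i \<omega>)\<^sup>2) \<and> (\<integral>\<omega>. (\<delta> i \<omega>)\<^sup>2 \<partial>M) > 0"
    and "\<exists>c>0. \<forall>n\<ge>1. \<forall>\<nu>. eigenvalue (cov_mat M \<delta> n) \<nu> \<longrightarrow> c \<le> \<nu>"
    and "\<exists>C. \<forall>n\<ge>1. \<forall>\<nu>. eigenvalue (cov_mat M \<delta> n) \<nu> \<longrightarrow> \<nu> \<le> C"
  shows "\<forall>\<epsilon>>0.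
           (\<forall>n\<ge>2*m+2. {\<omega>\<in>space M. pdist m (OLS m mu1 x (\<lambda>i. y i \<omega>) n) (param_vec m bk s \<alpha> \<gamma>) > \<epsilon>} \<in> sets M)
         \<and> ((\<lambda>n. measure M {\<omega>\<in>space M. pdist m (OLS m mu1 x (\<lambda>i. y i \<omega>) n) (param_vec m bk s \<alpha> \<gamma>) > \<epsilon>})
              \<longlonglongrightarrow> 0)"
proof -
  note A = assms
  interpret R: regs m mu1 h0 a0 a x
    by unfold_locales (use A in auto)
  interpret P: prob_space M by (rule A(1))
  define \<beta> where "\<beta> = param_vec m bk s \<alpha> \<gamma>"
  have yfit: "y i \<omega> = R.fit \<beta> i + \<delta> i \<omega>" for i \<omega>
    using A(8) R.y_repr unfolding \<beta>_def by simp
  obtain C where C: "\<forall>n\<ge>1. \<forall>\<nu>. eigenvalue (cov_mat M \<delta> n) \<nu> \<longrightarrow> \<nu> \<le> C" using A(13) by blast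
  define C' where "C' = max C 0"
  have dm: "\<delta> k \<in> borel_measurable M" if "k \<ge> 1" for k using A(9) that by blast
  have dsq: "integrable M (\<lambda>\<omega>. (\<delta> k \<omega>)\<^sup>2)" if "k \<ge> 1" for k using A(11) that by blast
  have dmean: "(\<integral>\<omega>. \<delta> k \<omega> \<partial>M) = 0" if "k \<ge> 1" for k using A(10) that by blast
  define q where "q n i j = covar M (\<delta> (Suc i)) (\<delta> (Suc j))" for n :: nat and i j
  have qint: "q n i j = (\<integral>\<omega>. \<delta> (Suc i) \<omega> * \<delta> (Suc j) \<omega> \<partial>M)" for n i j
    unfolding q_def covar_def using dmean[of "Suc i"] dmean[of "Suc j"] by simp
  have EZ: "integrable M (\<lambda>\<omega>. (\<Sum>k=1..n. R.F l k * \<delta> k \<omega>)\<^sup>2) \<and>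
            (\<integral>\<omega>. (\<Sum>k=1..n. R.F l k * \<delta> k \<omega>)\<^sup>2 \<partial>M) \<le> C' * R.G n l l" if n1: "n \<ge> 1" for n l
  proof -
    have re: "(\<Sum>k=1..n. R.F l k * \<delta> k \<omega>) = (\<Sum>i<n. R.F l (Suc i) * \<delta> (Suc i) \<omega>)" for \<omega>
      by (rule sum_bounds_lt_plus1[symmetric])
    have sm: "integrable M (\<lambda>\<omega>. (\<Sum>i\<in>{..<n}. R.F l (Suc i) * \<delta> (Suc i) \<omega>)\<^sup>2)"
        "(\<integral>\<omega>. (\<Sum>i\<in>{..<n}. R.F l (Suc i) * \<delta> (Suc i) \<omega>)\<^sup>2 \<partial>M)
          = (\<Sum>i\<in>{..<n}. \<Sum>j\<in>{..<n}. R.F l (Suc i) * R.F l (Suc j) * (\<integral>\<omega>. \<delta> (Suc i) \<omega> * \<delta> (Suc j) \<omega> \<partial>M))"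
      using second_moment[of "{..<n}" "\<lambda>i. \<delta> (Suc i)" M "\<lambda>i. R.F l (Suc i)"] dm dsq by auto
    have "(\<integral>\<omega>. (\<Sum>i\<in>{..<n}. R.F l (Suc i) * \<delta> (Suc i) \<omega>)\<^sup>2 \<partial>M) = Rq n (q n) (\<lambda>i. R.F l (Suc i))"
      unfolding sm(2) Rq_def qint by (simp add: mult_ac)
    also have "\<dots> \<le> C * nsq n (\<lambda>i. R.F l (Suc i))"
    proof (rule rayleigh)
      show "\<forall>i<n. \<forall>j<n. q n i j = q n j i" unfolding q_def covar_def by (simp add: mult.commute)
    next
      fix lam vv assume nz: "\<exists>j<n. vv j \<noteq> 0" and eq: "\<forall>i<n. (\<Sum>j<n. q n i j * vv j) = lam * vv i"
      define w where "w = vec n vv"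
      have cm: "cov_mat M \<delta> n = mat n n (\<lambda>(i,j). q n i j)" unfolding cov_mat_def q_def by simp
      have "eigenvector (cov_mat M \<delta> n) w lam" unfolding eigenvector_def
      proof (intro conjI)
        show "w \<in> carrier_vec (dim_row (cov_mat M \<delta> n))" unfolding w_def cm by simp
        show "w \<noteq> 0\<^sub>v (dim_row (cov_mat M \<delta> n))"
        proof
          assume "w = 0\<^sub>v (dim_row (cov_mat M \<delta> n))"
          then have "\<forall>j<n. vv j = 0" unfolding w_def cm by (metis dim_row_mat(1) index_vec index_zero_vec(1))
          with nz show False by blast
        qed
        show "cov_mat M \<delta> n *\<^sub>v w = lam \<cdot>\<^sub>v w"
        proof (rule eq_vecI)
          fix i assume "i < dim_vec (lam \<cdot>\<^sub>v w)"
          then have i: "i < n" unfolding w_def by simp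
          have "(cov_mat M \<delta> n *\<^sub>v w) $ i = (\<Sum>j<n. q n i j * w $ j)"
            unfolding cm by (rule mat_apply_eq[OF i]) (simp add: w_def)
          also have "\<dots> = (\<Sum>j<n. q n i j * vv j)" unfolding w_def by (intro sum.cong refl) simp
          also have "\<dots> = lam * vv i" using eq i by blast
          finally show "(cov_mat M \<delta> n *\<^sub>v w) $ i = (lam \<cdot>\<^sub>v w) $ i" using i unfolding w_def by simp
        qed (simp add: w_def cm)
      qed
      then have "eigenvalue (cov_mat M \<delta> n) lam" unfolding eigenvalue_def by blast
      then show "lam \<le> C" using C n1 by blast
    qed
    also have "\<dots> \<le> C' * nsq n (\<lambda>i. R.F l (Suc i))"
      unfolding C'_def by (intro mult_right_mono nsq_nonneg) simp
    also have "nsq n (\<lambda>i. R.F l (Suc i)) = R.G n l l"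
      unfolding nsq_def R.G_def power2_eq_square by (rule sum_bounds_lt_plus1)
    finally show ?thesis using sm(1) unfolding re by simp
  qed
  have pp: "R.pp = 2*m+2" by (rule R.pp_def)
  have ym: "(\<lambda>\<omega>. y i \<omega>) \<in> borel_measurable M" if "i \<ge> 1" for i
    unfolding yfit by (intro borel_measurable_add borel_measurable_const dm that)
  define f where "f n \<omega> = pdist m (OLS m mu1 x (\<lambda>i. y i \<omega>) n) \<beta>" for n \<omega>
  have fm: "f n \<in> borel_measurable M" if n: "n \<ge> 2*m+2" for n
  proof -
    have np: "n \<ge> R.pp" using n pp by simp
    define cc where "cc i j = OLS m mu1 x (\<lambda>k. if k = i then 1 else 0) n j" for i j
    have "f n \<omega> = sqrt (\<Sum>j<2*m+2. ((\<Sum>i=1..n. y i \<omega> * cc i j) - \<beta> j)\<^sup>2)" for \<omega>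
      unfolding f_def pdist_def cc_def R.OLS_linear[OF np, of "\<lambda>i. y i \<omega>"] by (rule refl)
    then have "f n = (\<lambda>\<omega>. sqrt (\<Sum>j<2*m+2. ((\<Sum>i=1..n. y i \<omega> * cc i j) - \<beta> j)\<^sup>2))" by (rule ext)
    also have "\<dots> \<in> borel_measurable M"
    proof (rule measurable_compose[OF _ borel_measurable_sqrt])
      show "(\<lambda>\<omega>. \<Sum>j<2*m+2. ((\<Sum>i=1..n. y i \<omega> * cc i j) - \<beta> j)\<^sup>2) \<in> borel_measurable M"
        unfolding power2_eq_square
        by (intro borel_measurable_sum borel_measurable_times borel_measurable_diff borel_measurable_const ym) auto
    qed
    finally show ?thesis .
  qed
  have sets: "{\<omega>\<in>space M. f n \<omega> > \<epsilon>} \<in> sets M" if "n \<ge> 2*m+2" for n \<epsilon>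
  proof -
    have "f n -` {\<epsilon><..} \<inter> space M \<in> sets M" by (rule measurable_sets[OF fm[OF that]]) simp
    moreover have "f n -` {\<epsilon><..} \<inter> space M = {\<omega>\<in>space M. f n \<omega> > \<epsilon>}" by auto
    ultimately show ?thesis by simp
  qed
  obtain N1 where N1: "N1 \<ge> R.pp" "\<forall>n\<ge>N1. \<forall>y \<beta> d. (\<forall>k\<in>{1..n}. y k = R.fit \<beta> k + d k) \<longrightarrow>
     (\<Sum>j<R.pp. (OLS m mu1 x y n j - \<beta> j)\<^sup>2) \<le> 1600 / real n * (\<Sum>l<R.pp. (\<Sum>k=1..n. R.F l k * d k)\<^sup>2 / (R.sc n l)\<^sup>2)"
    using R.err_bound by blast
  have "\<forall>\<^sub>F n in sequentially. \<forall>l\<in>{..<R.pp}. R.H n l l < 2"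
  proof (rule eventually_ball_finite)
    show "finite {..<R.pp}" by simp
    show "\<forall>l\<in>{..<R.pp}. \<forall>\<^sub>F n in sequentially. R.H n l l < 2"
    proof
      fix l assume l: "l \<in> {..<R.pp}"
      have "R.Hlim l l < 2" by (simp add: R.Hlim_def)
      then show "\<forall>\<^sub>F n in sequentially. R.H n l l < 2"
        using l by (intro order_tendstoD(2)[OF R.H_lim]) (auto simp: pp)
    qed
  qed
  then obtain N2 where N2: "\<And>n l. n \<ge> N2 \<Longrightarrow> l < R.pp \<Longrightarrow> R.H n l l < 2"
    by (auto simp: eventually_sequentially)
  show ?thesis
  proof (intro allI impI)
    fix \<epsilon> :: real assume eps: "\<epsilon> > 0"
    have part1: "\<forall>n\<ge>2*m+2. {\<omega>\<in>space M. pdist m (OLS m mu1 x (\<lambda>i. y i \<omega>) n) (param_vec m bk s \<alpha> \<gamma>) > \<epsilon>} \<in> sets M"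
      using sets unfolding f_def \<beta>_def by blast
    define K0 where "K0 = 1600 * (C' * (2 * real R.pp)) / \<epsilon>\<^sup>2"
    have bound: "measure M {\<omega>\<in>space M. f n \<omega> > \<epsilon>} \<le> K0 / real n" if n: "n \<ge> max N1 N2" for n
    proof -
      have nN1: "n \<ge> N1" and nN2: "n \<ge> N2" using n by auto
      have np: "n \<ge> R.pp" using nN1 N1(1) by simp
      have n1: "n \<ge> 1" using np pp by simp
      have npos: "real n > 0" using n1 by simp
      define W where "W \<omega> = (\<Sum>l<R.pp. (\<Sum>k=1..n. R.F l k * \<delta> k \<omega>)\<^sup>2 / (R.sc n l)\<^sup>2)" for \<omega>
      have Wint: "integrable M W"
        unfolding W_def using EZ[OF n1] by (intro Bochner_Integration.integrable_sum integrable_divide) auto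
      have EW: "(\<integral>\<omega>. W \<omega> \<partial>M) \<le> C' * (2 * real R.pp)"
      proof -
        have "(\<integral>\<omega>. W \<omega> \<partial>M) = (\<Sum>l<R.pp. (\<integral>\<omega>. (\<Sum>k=1..n. R.F l k * \<delta> k \<omega>)\<^sup>2 \<partial>M) / (R.sc n l)\<^sup>2)"
          unfolding W_def using EZ[OF n1]
          by (subst Bochner_Integration.integral_sum) (auto intro: integrable_divide)
        also have "\<dots> \<le> (\<Sum>l<R.pp. C' * R.H n l l)"
        proof (rule sum_mono)
          fix l assume l: "l \<in> {..<R.pp}"
          have scp: "R.sc n l > 0" using R.sc_pos[of n l] n1 by simp
          have "(\<integral>\<omega>. (\<Sum>k=1..n. R.F l k * \<delta> k \<omega>)\<^sup>2 \<partial>M) / (R.sc n l)\<^sup>2 \<le> C' * R.G n l l / (R.sc n l)\<^sup>2"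
            using EZ[OF n1, of l] scp by (intro divide_right_mono) auto
          also have "\<dots> = C' * R.H n l l" unfolding R.H_def by (simp add: power2_eq_square)
          finally show "(\<integral>\<omega>. (\<Sum>k=1..n. R.F l k * \<delta> k \<omega>)\<^sup>2 \<partial>M) / (R.sc n l)\<^sup>2 \<le> C' * R.H n l l" .
        qed
        also have "\<dots> \<le> (\<Sum>l<R.pp. C' * 2)"
          using N2[OF nN2] unfolding C'_def by (intro sum_mono mult_left_mono) (auto intro: less_imp_le)
        also have "\<dots> = C' * (2 * real R.pp)" by simp
        finally show ?thesis .
      qed
      have Wnn: "0 \<le> W \<omega>" for \<omega> unfolding W_def by (intro sum_nonneg divide_nonneg_nonneg) auto
      have sub: "{\<omega>\<in>space M. f n \<omega> > \<epsilon>} \<subseteq> {\<omega>\<in>space M. \<epsilon>\<^sup>2 * real n / 1600 \<le> W \<omega>}"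
      proof
        fix \<omega> assume \<omega>: "\<omega> \<in> {\<omega>\<in>space M. f n \<omega> > \<epsilon>}"
        define S where "S = (\<Sum>j<R.pp. (OLS m mu1 x (\<lambda>i. y i \<omega>) n j - \<beta> j)\<^sup>2)"
        have yk: "\<forall>k\<in>{1..n}. y k \<omega> = R.fit \<beta> k + \<delta> k \<omega>" using yfit by simp
        have "S \<le> 1600 / real n * W \<omega>"
          unfolding S_def W_def by (rule N1(2)[rule_format, OF nN1]) (simp add: yfit)
        moreover have "\<epsilon> < sqrt S" using \<omega> unfolding f_def pdist_def S_def pp by simp
        then have "sqrt (\<epsilon>\<^sup>2) < sqrt S" using eps by simp
        then have "\<epsilon>\<^sup>2 < S" by (simp only: real_sqrt_less_iff)
        ultimately have "\<epsilon>\<^sup>2 < 1600 / real n * W \<omega>" by linarith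
        then have "\<epsilon>\<^sup>2 * real n / 1600 < W \<omega>" using npos by (simp add: field_simps)
        then show "\<omega> \<in> {\<omega>\<in>space M. \<epsilon>\<^sup>2 * real n / 1600 \<le> W \<omega>}" using \<omega> by simp
      qed
      have Wm: "W \<in> borel_measurable M" using Wint by (rule borel_measurable_integrable)
      have "measure M {\<omega>\<in>space M. f n \<omega> > \<epsilon>} \<le> measure M {\<omega>\<in>space M. \<epsilon>\<^sup>2 * real n / 1600 \<le> W \<omega>}"
        by (rule P.finite_measure_mono[OF sub]) (rule sets_ge[OF Wm])
      also have "\<dots> \<le> (\<integral>\<omega>. W \<omega> \<partial>M) / (\<epsilon>\<^sup>2 * real n / 1600)"
        using integral_Markov_inequality_measure[OF Wint sets.top, of "\<epsilon>\<^sup>2 * real n / 1600"] Wnn eps npos by simp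
      also have "\<dots> \<le> C' * (2 * real R.pp) / (\<epsilon>\<^sup>2 * real n / 1600)"
        using EW eps npos by (intro divide_right_mono) auto
      also have "\<dots> = K0 / real n" unfolding K0_def using eps npos by (simp add: field_simps)
      finally show ?thesis .
    qed
    have part2: "(\<lambda>n. measure M {\<omega>\<in>space M. pdist m (OLS m mu1 x (\<lambda>i. y i \<omega>) n) (param_vec m bk s \<alpha> \<gamma>) > \<epsilon>}) \<longlonglongrightarrow> 0"
      unfolding \<beta>_def[symmetric] f_def[symmetric]
    proof (rule Lim_null_comparison)
      show "\<forall>\<^sub>F n in sequentially. norm (measure M {\<omega>\<in>space M. f n \<omega> > \<epsilon>}) \<le> K0 / real n"
        using bound by (auto simp: eventually_sequentially intro!: exI[of _ "max N1 N2"])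
      show "(\<lambda>n. K0 / real n) \<longlonglongrightarrow> 0" by (rule lim_const_over_n)
    qed
    show "(\<forall>n\<ge>2*m+2. {\<omega>\<in>space M. pdist m (OLS m mu1 x (\<lambda>i. y i \<omega>) n) (param_vec m bk s \<alpha> \<gamma>) > \<epsilon>} \<in> sets M)
         \<and> ((\<lambda>n. measure M {\<omega>\<in>space M. pdist m (OLS m mu1 x (\<lambda>i. y i \<omega>) n) (param_vec m bk s \<alpha> \<gamma>) > \<epsilon>})
              \<longlonglongrightarrow> 0)" using part1 part2 by blast
  qed
qed


end
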